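(* Let $X$ be a complex Banach space and $A\in B(X)$. Then $A$ is Koliha–Drazin invertible if and only if there exists $T\in B(X)$ with $\mathcal{R}(T)=K(A)$ and $\mathcal{N}(T)=H_0(A)$ such that $A$ is Mary invertible along $T$. Moreover, if $A$ is Mary invertible along some $T\in B(X)$ with $\mathcal{R}(T)=K(A)$ and $\mathcal{N}(T)=H_0(A)$, then $A$ is Koliha–Drazin invertible and the Mary inverse of $A$ along $T$ equals the Koliha–Drazin inverse of $A$.
   Context: $\mathcal{R},\mathcal{N}$ denote range and nullspace. $A$ is Mary invertible along $T$ with Mary inverse $B\in B(X)$ if $BAB=B$ and there exist $L,U,V,W\in B(X)$ with $B=TU$, $T=BW$, $B=LT$, $T=VB$. The quasinilpotent part of $A$ is $H_0(A)=\{x\in X:\lim_{n\to\infty}\|A^nx\|^{1/n}=0\}$. The analytical core $K(A)$ is the set of $x\in X$ for which there exist a sequence $(u_n)_{n\ge0}\subset X$ and $c>0$ with $u_0=x$, $Au_{n+1}=u_n$ and $\|u_n\|\le c^n\|x\|$ for all $n\ge0$. $A$ is Koliha–Drazin invertible if there exists $C\in B(X)$ with $CAC=C$, $AC=CA$, and $A(I-AC)$ quasinilpotent (spectrum $\{0\}$); such $C$ is unique and called the Koliha–Drazin inverse. *)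

theory Defs
  imports "HOL-Analysis.Analysis"
begin

class complex_banach = banach +
  fixes scaleC :: "complex \<Rightarrow> 'a \<Rightarrow> 'a" (infixr "*\<^sub>C" 75)
  assumes scaleC_add_right: "a *\<^sub>C (x + y) = a *\<^sub>C x + a *\<^sub>C y"
    and scaleC_add_left: "(a + b) *\<^sub>C x = a *\<^sub>C x + b *\<^sub>C x"
    and scaleC_scaleC: "a *\<^sub>C (b *\<^sub>C x) = (a * b) *\<^sub>C x"
    and scaleC_one: "1 *\<^sub>C x = x"
    and scaleR_scaleC: "scaleR r x = (complex_of_real r) *\<^sub>C x"
    and norm_scaleC: "norm (a *\<^sub>C x) = cmod a * norm x"

text \<open>Elements of B(X): bounded complex-linear operators.\<close>
definition bclin :: "('a::complex_banach \<Rightarrow> 'a) \<Rightarrow> bool" where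
  "bclin A \<longleftrightarrow> bounded_linear A \<and> (\<forall>c x. A (c *\<^sub>C x) = c *\<^sub>C A x)"

definition op_invertible :: "('a::complex_banach \<Rightarrow> 'a) \<Rightarrow> bool" where
  "op_invertible A \<longleftrightarrow> (\<exists>B. bclin B \<and> A \<circ> B = id \<and> B \<circ> A = id)"

definition op_spectrum :: "('a::complex_banach \<Rightarrow> 'a) \<Rightarrow> complex set" where
  "op_spectrum A = {z. \<not> op_invertible (\<lambda>x. z *\<^sub>C x - A x)}"

definition quasinilpotent :: "('a::complex_banach \<Rightarrow> 'a) \<Rightarrow> bool" where
  "quasinilpotent A \<longleftrightarrow> op_spectrum A \<subseteq> {0}"

definition KD_inverse :: "('a::complex_banach \<Rightarrow> 'a) \<Rightarrow> ('a \<Rightarrow> 'a) \<Rightarrow> bool" where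
  "KD_inverse A C \<longleftrightarrow> bclin C \<and> C \<circ> A \<circ> C = C \<and> A \<circ> C = C \<circ> A
     \<and> quasinilpotent (\<lambda>x. A (x - A (C x)))"

definition KD_invertible :: "('a::complex_banach \<Rightarrow> 'a) \<Rightarrow> bool" where
  "KD_invertible A \<longleftrightarrow> (\<exists>C. KD_inverse A C)"

definition KD_inv :: "('a::complex_banach \<Rightarrow> 'a) \<Rightarrow> ('a \<Rightarrow> 'a)" where
  "KD_inv A = (THE C. KD_inverse A C)"

definition mary_inverse_along :: "('a::complex_banach \<Rightarrow> 'a) \<Rightarrow> ('a \<Rightarrow> 'a) \<Rightarrow> ('a \<Rightarrow> 'a) \<Rightarrow> bool" where
  "mary_inverse_along A T B \<longleftrightarrow> bclin B \<and> B \<circ> A \<circ> B = B \<and>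
     (\<exists>L U V W. bclin L \<and> bclin U \<and> bclin V \<and> bclin W \<and>
        B = T \<circ> U \<and> T = B \<circ> W \<and> B = L \<circ> T \<and> T = V \<circ> B)"

definition quasinilpotent_part :: "('a::complex_banach \<Rightarrow> 'a) \<Rightarrow> 'a set" where
  "quasinilpotent_part A = {x. (\<lambda>n. norm ((A ^^ n) x) powr (1 / real n)) \<longlonglongrightarrow> 0}"

definition analytical_core :: "('a::complex_banach \<Rightarrow> 'a) \<Rightarrow> 'a set" where
  "analytical_core A = {x. \<exists>u c. c > (0::real) \<and> u 0 = x \<and> (\<forall>n. A (u (Suc n)) = u n)
      \<and> (\<forall>n. norm (u n) \<le> c ^ n * norm x)}"

end

theory Submission
  imports Defs
begin

lemma scaleC_zero_left [simp]: "(0::complex) *\<^sub>C x = 0"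
  by (metis scaleR_scaleC scaleR_zero_left of_real_0)

lemma scaleC_zero_right [simp]: "c *\<^sub>C (0::'a::complex_banach) = 0"
proof -
  have "c *\<^sub>C (0::'a) = c *\<^sub>C 0 + c *\<^sub>C 0" by (metis scaleC_add_right add_0)
  thus ?thesis by simp
qed

lemma scaleC_minus_right: "c *\<^sub>C (- x) = - (c *\<^sub>C (x::'a::complex_banach))"
  by (metis add.right_inverse add_eq_0_iff scaleC_add_right scaleC_zero_right)

lemma scaleC_diff_right: "c *\<^sub>C (x - y) = c *\<^sub>C x - c *\<^sub>C (y::'a::complex_banach)"
  by (metis diff_conv_add_uminus scaleC_add_right scaleC_minus_right)

lemma scaleC_minus_left: "(- c) *\<^sub>C x = - (c *\<^sub>C (x::'a::complex_banach))"
  by (metis add.right_inverse add_eq_0_iff scaleC_add_left scaleC_zero_left)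

lemma scaleC_diff_left: "(a - b) *\<^sub>C x = a *\<^sub>C x - b *\<^sub>C (x::'a::complex_banach)"
  by (metis diff_conv_add_uminus scaleC_add_left scaleC_minus_left)

lemma scaleC_scaleR_comm: "c *\<^sub>C (r *\<^sub>R x) = r *\<^sub>R (c *\<^sub>C (x::'a::complex_banach))"
  by (simp add: scaleR_scaleC scaleC_scaleC mult.commute)

lemma scaleC_of_real: "complex_of_real r *\<^sub>C x = r *\<^sub>R (x::'a::complex_banach)"
  by (simp add: scaleR_scaleC)

lemma bounded_linear_scaleC: "bounded_linear (\<lambda>x::'a::complex_banach. c *\<^sub>C x)"
  by (rule bounded_linear_intro[where K="cmod c"])
     (auto simp: scaleC_add_right scaleC_scaleR_comm norm_scaleC)

lemma scaleC_sum_right: "c *\<^sub>C (\<Sum>i\<in>S. f i) = (\<Sum>i\<in>S. c *\<^sub>C (f i::'a::complex_banach))"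
  using linear_sum[OF bounded_linear.linear[OF bounded_linear_scaleC]] by blast

lemma scaleC_sum_left: "(\<Sum>i\<in>S. f i) *\<^sub>C (x::'a::complex_banach) = (\<Sum>i\<in>S. f i *\<^sub>C x)"
  by (induction S rule: infinite_finite_induct) (auto simp: scaleC_add_left)

lemma scaleC_one' [simp]: "1 *\<^sub>C x = x" by (rule scaleC_one)

lemma bclin_bl: "bclin A \<Longrightarrow> bounded_linear A" by (simp add: bclin_def)
lemma bclin_C: "bclin A \<Longrightarrow> A (c *\<^sub>C x) = c *\<^sub>C A x" by (simp add: bclin_def)
lemma bclin_add: "bclin A \<Longrightarrow> A (x + y) = A x + A y"
  by (simp add: bclin_def linear_add bounded_linear.linear)
lemma bclin_diff: "bclin A \<Longrightarrow> A (x - y) = A x - A y"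
  by (simp add: bclin_def linear_diff bounded_linear.linear)
lemma bclin_zero: "bclin A \<Longrightarrow> A 0 = 0"
  by (simp add: bclin_def linear_0 bounded_linear.linear)
lemma bclin_scaleR: "bclin A \<Longrightarrow> A (r *\<^sub>R x) = r *\<^sub>R A x"
  by (simp add: bclin_def linear_scale bounded_linear.linear)
lemma bclin_sum: "bclin A \<Longrightarrow> A (\<Sum>i\<in>S. f i) = (\<Sum>i\<in>S. A (f i))"
  by (simp add: bclin_def linear_sum bounded_linear.linear)
lemma bclin_onorm: "bclin A \<Longrightarrow> norm (A x) \<le> onorm A * norm x"
  by (simp add: bclin_def onorm)
lemma bclin_onorm_nn: "bclin A \<Longrightarrow> 0 \<le> onorm A"
  by (simp add: bclin_def onorm_pos_le)

lemma bclin_id: "bclin (\<lambda>x. x)"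
  by (simp add: bclin_def bounded_linear_ident)
lemma bclin_id': "bclin id"
  by (simp add: bclin_def id_def bounded_linear_ident)

lemma bclin_comp: "bclin A \<Longrightarrow> bclin B \<Longrightarrow> bclin (\<lambda>x. A (B x))"
  by (simp add: bclin_def bounded_linear_compose)
lemma bclin_o: "bclin A \<Longrightarrow> bclin B \<Longrightarrow> bclin (A \<circ> B)"
  by (simp add: o_def bclin_comp)

lemma bclin_funpow: "bclin A \<Longrightarrow> bclin (A ^^ n)"
  by (induction n) (auto simp: bclin_id' bclin_o)

lemma bclin_minus: "bclin A \<Longrightarrow> bclin B \<Longrightarrow> bclin (\<lambda>x. A x - B x)"
  by (simp add: bclin_def bounded_linear_sub scaleC_diff_right)
lemma bclin_plus: "bclin A \<Longrightarrow> bclin B \<Longrightarrow> bclin (\<lambda>x. A x + B x)"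
  by (simp add: bclin_def bounded_linear_add scaleC_add_right)
lemma bclin_scaleC: "bclin A \<Longrightarrow> bclin (\<lambda>x. c *\<^sub>C A x)"
  by (auto simp add: bclin_def scaleC_scaleC mult.commute
      intro: bounded_linear_compose[OF bounded_linear_scaleC])
lemma bclin_scaleR_fun: "bclin A \<Longrightarrow> bclin (\<lambda>x. r *\<^sub>R A x)"
  by (auto simp add: bclin_def scaleC_scaleR_comm
      intro: bounded_linear_compose[OF bounded_linear_scaleR_right])
lemma bclin_sum_fun: "(\<And>i. i \<in> S \<Longrightarrow> bclin (F i)) \<Longrightarrow> bclin (\<lambda>x. \<Sum>i\<in>S. F i x)"
  by (induction S rule: infinite_finite_induct)
     (auto simp: bclin_def scaleC_zero_right bounded_linear_add scaleC_add_right intro: bounded_linear_zero)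

lemma funpow_onorm: "bclin A \<Longrightarrow> norm ((A ^^ n) x) \<le> onorm A ^ n * norm x"
proof (induction n)
  case 0 then show ?case by simp
next
  case (Suc n)
  have "norm ((A ^^ Suc n) x) = norm (A ((A ^^ n) x))" by simp
  also have "\<dots> \<le> onorm A * norm ((A ^^ n) x)" using Suc bclin_onorm by blast
  also have "\<dots> \<le> onorm A * (onorm A ^ n * norm x)"
    using Suc by (intro mult_left_mono) (auto simp: bclin_onorm_nn)
  finally show ?case by (simp add: mult.assoc)
qed

lemma funpow_comm: "(\<And>v. A (B v) = B (A v)) \<Longrightarrow> A ((B ^^ n) v) = (B ^^ n) (A v)"
  by (induction n) auto

lemma onorm_le_nn: "0 \<le> b \<Longrightarrow> (\<And>x. norm (f x) \<le> b * norm x) \<Longrightarrow> onorm f \<le> b"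
  by (rule onorm_bound) auto


definition omega :: "nat \<Rightarrow> complex" where "omega N = cis (2 * pi / real N)"

lemma omega_pow: "omega N ^ j = cis (real j * (2 * pi / real N))"
  unfolding omega_def by (rule Complex.DeMoivre)

lemma norm_omega_pow [simp]: "cmod (omega N ^ k) = 1"
  by (simp add: omega_pow)

lemma omega_pow_N: "N > 0 \<Longrightarrow> (omega N ^ k) ^ N = 1"
proof -
  assume N: "N > 0"
  have "(omega N ^ k) ^ N = cis (real N * (real k * (2 * pi / real N)))"
    by (simp only: omega_pow Complex.DeMoivre)
  also have "real N * (real k * (2 * pi / real N)) = 2 * pi * real k" using N by simp
  finally have "(omega N ^ k) ^ N = cis (2 * pi * real k)" .
  also have "\<dots> = 1" by (rule cis_multiple_2pi) simp
  finally show ?thesis .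
qed

lemma omega_sum:
  assumes "0 < j" "j < N"
  shows "(\<Sum>k<N. (omega N ^ k) ^ j) = 0"
proof -
  define q where "q = omega N ^ j"
  have sw: "(omega N ^ k) ^ j = q ^ k" for k by (simp add: q_def power_mult[symmetric] mult.commute)
  have qN: "q ^ N = 1" using omega_pow_N[of N j] assms by (simp add: q_def power_mult[symmetric] mult.commute)
  have q1: "q \<noteq> 1"
  proof
    assume "q = 1"
    hence "cos (real j * (2 * pi / real N)) = 1"
      by (simp add: q_def omega_pow cis.code complex_eq_iff)
    then obtain n :: int where n: "real j * (2 * pi / real N) = real_of_int n * 2 * pi"
      using cos_one_2pi_int by blast
    hence "real j / real N = n" using assms by (simp add: field_simps)
    moreover have "0 < real j / real N" "real j / real N < 1" using assms by auto
    ultimately have "0 < n" "n < 1" by auto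
    thus False by simp
  qed
  have "(\<Sum>k<N. q ^ k) = (q ^ N - 1) / (q - 1)" by (rule geometric_sum[OF q1])
  thus ?thesis by (simp add: sw qN)
qed


locale resolv =
  fixes x :: "'a::complex_banach \<Rightarrow> 'a" and R :: "complex \<Rightarrow> 'a \<Rightarrow> 'a"
  assumes bx: "bclin x"
  and bR: "cmod \<mu> \<le> 1 \<Longrightarrow> bclin (R \<mu>)"
  and Rr: "cmod \<mu> \<le> 1 \<Longrightarrow> R \<mu> v - \<mu> *\<^sub>C x (R \<mu> v) = v"
  and Rl: "cmod \<mu> \<le> 1 \<Longrightarrow> R \<mu> (v - \<mu> *\<^sub>C x v) = v"
begin

lemma R0: "R 0 v = v"
  using Rl[of 0 v] by simp

lemma Rid:
  assumes "cmod \<mu> \<le> 1" "cmod \<nu> \<le> 1"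
  shows "R \<mu> v = R \<nu> v + (\<mu> - \<nu>) *\<^sub>C R \<nu> (x (R \<mu> v))"
proof -
  define w where "w = R \<mu> v"
  have v: "w - \<mu> *\<^sub>C x w = v" using Rr[OF assms(1)] w_def by simp
  have "w - \<nu> *\<^sub>C x w = v + (\<mu> - \<nu>) *\<^sub>C x w"
    using v by (simp add: scaleC_diff_left algebra_simps)
  hence "w = R \<nu> (v + (\<mu> - \<nu>) *\<^sub>C x w)" using Rl[OF assms(2), of w] by simp
  also have "\<dots> = R \<nu> v + (\<mu> - \<nu>) *\<^sub>C R \<nu> (x w)"
    using bR[OF assms(2)] by (simp add: bclin_add bclin_C)
  finally show ?thesis by (simp add: w_def)
qed

lemma Rdiff_bound:
  assumes "cmod \<mu> \<le> 1" "cmod \<nu> \<le> 1"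
  shows "norm (R \<mu> v - R \<nu> v) \<le> cmod (\<mu> - \<nu>) * onorm (R \<nu>) * onorm x * norm (R \<mu> v)"
proof -
  have "R \<mu> v - R \<nu> v = (\<mu> - \<nu>) *\<^sub>C R \<nu> (x (R \<mu> v))"
    using Rid[OF assms, of v] by (metis add_diff_cancel_left')
  hence "norm (R \<mu> v - R \<nu> v) = cmod (\<mu> - \<nu>) * norm (R \<nu> (x (R \<mu> v)))"
    by (simp add: norm_scaleC)
  also have "\<dots> \<le> cmod (\<mu> - \<nu>) * (onorm (R \<nu>) * (onorm x * norm (R \<mu> v)))"
  proof (intro mult_left_mono)
    have "norm (R \<nu> (x (R \<mu> v))) \<le> onorm (R \<nu>) * norm (x (R \<mu> v))"
      using bR[OF assms(2)] bclin_onorm by blast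
    also have "\<dots> \<le> onorm (R \<nu>) * (onorm x * norm (R \<mu> v))"
      using bx bR[OF assms(2)] by (intro mult_left_mono bclin_onorm bclin_onorm_nn)
    finally show "norm (R \<nu> (x (R \<mu> v))) \<le> onorm (R \<nu>) * (onorm x * norm (R \<mu> v))" .
  qed simp
  finally show ?thesis by (simp add: mult.assoc)
qed

lemma Rloc:
  assumes "cmod \<mu> \<le> 1" "cmod \<nu> \<le> 1" "cmod (\<mu> - \<nu>) * onorm (R \<nu>) * onorm x \<le> 1/2"
  shows "norm (R \<mu> v) \<le> 2 * onorm (R \<nu>) * norm v"
proof -
  have "norm (R \<mu> v) \<le> norm (R \<nu> v) + norm (R \<mu> v - R \<nu> v)"
    by (metis add.commute diff_add_cancel norm_triangle_ineq)
  also have "\<dots> \<le> onorm (R \<nu>) * norm v + 1/2 * norm (R \<mu> v)"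
  proof (intro add_mono)
    show "norm (R \<nu> v) \<le> onorm (R \<nu>) * norm v" using bR[OF assms(2)] bclin_onorm by blast
    show "norm (R \<mu> v - R \<nu> v) \<le> 1 / 2 * norm (R \<mu> v)"
      using Rdiff_bound[OF assms(1,2), of v] assms(3)
      by (meson mult_right_mono norm_ge_zero order_trans)
  qed
  finally show ?thesis by simp
qed

lemma onorm_R_cont: "continuous_on (cball 0 1) (\<lambda>\<mu>. onorm (R \<mu>))"
  unfolding continuous_on_iff
proof (intro ballI allI impI)
  fix \<nu> :: complex and e :: real
  assume \<nu>: "\<nu> \<in> cball 0 1" and e: "0 < e"
  define a where "a = onorm (R \<nu>)"
  define b where "b = onorm x"
  have a0: "0 \<le> a" using bR \<nu> a_def bclin_onorm_nn by auto
  have b0: "0 \<le> b" using bx b_def bclin_onorm_nn by auto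
  define d where "d = min (1 / (2 * a * b + 1)) (e / (2 * a * a * b + 1))"
  have d0: "0 < d" using a0 b0 e by (simp add: d_def add_nonneg_pos)
  show "\<exists>d>0. \<forall>\<mu>\<in>cball 0 1. dist \<mu> \<nu> < d \<longrightarrow> dist (onorm (R \<mu>)) (onorm (R \<nu>)) < e"
  proof (intro exI[of _ d] conjI d0 ballI impI)
    fix \<mu> assume \<mu>: "\<mu> \<in> cball 0 1" and dm: "dist \<mu> \<nu> < d"
    have m1: "cmod \<mu> \<le> 1" and n1: "cmod \<nu> \<le> 1" using \<mu> \<nu> by auto
    have dmn: "cmod (\<mu> - \<nu>) < d" using dm by (simp add: dist_norm)
    have "cmod (\<mu> - \<nu>) * (2 * a * b + 1) \<le> d * (2 * a * b + 1)"
      using dmn a0 b0 by (intro mult_right_mono) auto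
    also have "\<dots> \<le> 1"
    proof -
      have p: "0 < 2 * a * b + 1" using a0 b0 by (simp add: add_nonneg_pos)
      have "d \<le> 1 / (2 * a * b + 1)" by (simp add: d_def)
      thus ?thesis using p by (simp add: le_divide_eq)
    qed
    finally have c1: "cmod (\<mu> - \<nu>) * (2 * a * b + 1) \<le> 1" .
    have "cmod (\<mu> - \<nu>) * a * b \<le> 1/2"
    proof -
      have "cmod (\<mu> - \<nu>) * (2 * a * b) \<le> cmod (\<mu> - \<nu>) * (2 * a * b + 1)"
        by (intro mult_left_mono) auto
      with c1 have "cmod (\<mu> - \<nu>) * (2 * a * b) \<le> 1" by linarith
      moreover have "cmod (\<mu> - \<nu>) * a * b = (cmod (\<mu> - \<nu>) * (2 * a * b)) / 2" by simp
      ultimately show ?thesis by linarith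
    qed
    hence loc: "\<And>v. norm (R \<mu> v) \<le> 2 * a * norm v"
      using Rloc[OF m1 n1] a_def b_def by blast
    have "onorm (\<lambda>v. R \<mu> v - R \<nu> v) \<le> cmod (\<mu> - \<nu>) * a * b * (2 * a)"
    proof (rule onorm_le_nn)
      show "0 \<le> cmod (\<mu> - \<nu>) * a * b * (2 * a)" using a0 b0 by simp
      fix v
      have "norm (R \<mu> v - R \<nu> v) \<le> cmod (\<mu> - \<nu>) * a * b * norm (R \<mu> v)"
        using Rdiff_bound[OF m1 n1] a_def b_def by blast
      also have "\<dots> \<le> cmod (\<mu> - \<nu>) * a * b * (2 * a * norm v)"
        using loc a0 b0 by (intro mult_left_mono) auto
      finally show "norm (R \<mu> v - R \<nu> v) \<le> cmod (\<mu> - \<nu>) * a * b * (2 * a) * norm v"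
        by (simp add: algebra_simps)
    qed
    also have "\<dots> = cmod (\<mu> - \<nu>) * (2 * a * a * b)" by (simp add: algebra_simps)
    also have "\<dots> \<le> cmod (\<mu> - \<nu>) * (2 * a * a * b + 1)" by (intro mult_left_mono) auto
    also have "\<dots> < d * (2 * a * a * b + 1)"
      using dmn a0 b0 by (intro mult_strict_right_mono) (auto intro: add_nonneg_pos)
    also have "\<dots> \<le> e"
    proof -
      have p: "0 < 2 * a * a * b + 1" using a0 b0 by (simp add: add_nonneg_pos)
      have "d \<le> e / (2 * a * a * b + 1)" by (simp add: d_def)
      thus ?thesis using p by (simp add: le_divide_eq)
    qed
    finally have lt: "onorm (\<lambda>v. R \<mu> v - R \<nu> v) < e" .
    have bl: "bounded_linear (R \<mu>)" "bounded_linear (R \<nu>)"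
      using bR m1 n1 bclin_bl by auto
    have "onorm (R \<mu>) \<le> onorm (R \<nu>) + onorm (\<lambda>v. R \<mu> v - R \<nu> v)"
      using onorm_triangle[OF bounded_linear_sub[OF bl(1) bl(2)] bl(2)] by simp
    moreover have "onorm (R \<nu>) \<le> onorm (R \<mu>) + onorm (\<lambda>v. R \<mu> v - R \<nu> v)"
    proof -
      have "onorm (R \<nu>) \<le> onorm (R \<mu>) + onorm (\<lambda>v. R \<nu> v - R \<mu> v)"
        using onorm_triangle[OF bounded_linear_sub[OF bl(2) bl(1)] bl(1)] by simp
      moreover have "onorm (\<lambda>v. R \<nu> v - R \<mu> v) = onorm (\<lambda>v. R \<mu> v - R \<nu> v)"
        using onorm_neg[of "\<lambda>v. R \<mu> v - R \<nu> v"] by simp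
      ultimately show ?thesis by simp
    qed
    ultimately show "dist (onorm (R \<mu>)) (onorm (R \<nu>)) < e"
      using lt by (simp add: dist_real_def abs_le_iff)
  qed
qed

lemma R_bound: "\<exists>M\<ge>1. \<forall>\<mu>. cmod \<mu> \<le> 1 \<longrightarrow> onorm (R \<mu>) \<le> M"
proof -
  have "compact ((\<lambda>\<mu>. onorm (R \<mu>)) ` cball 0 1)"
    by (intro compact_continuous_image onorm_R_cont compact_cball)
  then obtain M where "\<forall>y\<in>(\<lambda>\<mu>. onorm (R \<mu>)) ` cball 0 1. norm y \<le> M"
    using compact_imp_bounded bounded_iff by blast
  hence "\<forall>\<mu>. cmod \<mu> \<le> 1 \<longrightarrow> onorm (R \<mu>) \<le> max M 1" by force
  thus ?thesis by (intro exI[of _ "max M 1"]) auto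
qed


lemma Rcomm: "cmod \<mu> \<le> 1 \<Longrightarrow> R \<mu> (x v) = x (R \<mu> v)"
proof -
  assume m: "cmod \<mu> \<le> 1"
  define w where "w = R \<mu> v"
  have v: "v = w - \<mu> *\<^sub>C x w" using Rr[OF m] w_def by simp
  have "x v = x w - \<mu> *\<^sub>C x (x w)" using v bx by (simp add: bclin_diff bclin_C)
  thus ?thesis using Rl[OF m, of "x w"] w_def by simp
qed

lemma Rcomm_pow: "cmod \<mu> \<le> 1 \<Longrightarrow> R \<mu> ((x ^^ n) v) = (x ^^ n) (R \<mu> v)"
  by (rule funpow_comm) (rule Rcomm)

lemma tele: "(\<Sum>j<N. \<mu> ^ j *\<^sub>C (x ^^ j) w) - \<mu> *\<^sub>C x (\<Sum>j<N. \<mu> ^ j *\<^sub>C (x ^^ j) w)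
   = w - \<mu> ^ N *\<^sub>C (x ^^ N) w"
proof (induction N)
  case 0 then show ?case using bx by (simp add: bclin_zero)
next
  case (Suc N)
  define S where "S = (\<Sum>j<N. \<mu> ^ j *\<^sub>C (x ^^ j) w)"
  have IH: "S - \<mu> *\<^sub>C x S = w - \<mu> ^ N *\<^sub>C (x ^^ N) w" using Suc S_def by simp
  have "(\<Sum>j<Suc N. \<mu> ^ j *\<^sub>C (x ^^ j) w) = S + \<mu> ^ N *\<^sub>C (x ^^ N) w" by (simp add: S_def)
  moreover have "x (S + \<mu> ^ N *\<^sub>C (x ^^ N) w) = x S + \<mu> ^ N *\<^sub>C (x ^^ Suc N) w"
    using bx by (simp add: bclin_add bclin_C)
  ultimately have "(\<Sum>j<Suc N. \<mu> ^ j *\<^sub>C (x ^^ j) w) - \<mu> *\<^sub>C x (\<Sum>j<Suc N. \<mu> ^ j *\<^sub>C (x ^^ j) w)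
     = (S - \<mu> *\<^sub>C x S) + \<mu> ^ N *\<^sub>C (x ^^ N) w - \<mu> ^ Suc N *\<^sub>C (x ^^ Suc N) w"
    by (simp add: scaleC_add_right scaleC_scaleC algebra_simps)
  also have "\<dots> = w - \<mu> ^ Suc N *\<^sub>C (x ^^ Suc N) w" using IH by simp
  finally show ?case .
qed

lemma R_S: "cmod \<mu> \<le> 1 \<Longrightarrow> R \<mu> (w - \<mu> ^ N *\<^sub>C (x ^^ N) w) = (\<Sum>j<N. \<mu> ^ j *\<^sub>C (x ^^ j) w)"
  unfolding tele[symmetric] by (rule Rl)

definition H :: "nat \<Rightarrow> real \<Rightarrow> 'a \<Rightarrow> 'a" where
  "H N t v = (1 / real N) *\<^sub>R (\<Sum>k<N. R (omega N ^ k * complex_of_real t) v)"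

lemma cmod_wt: "0 \<le> t \<Longrightarrow> t \<le> 1 \<Longrightarrow> cmod (omega N ^ k * complex_of_real t) \<le> 1"
  by (simp add: norm_mult)

lemma H_left:
  assumes N: "0 < N" and t: "0 \<le> t" "t \<le> 1"
  shows "H N t (w - complex_of_real (t ^ N) *\<^sub>C (x ^^ N) w) = w"
proof -
  have pw: "(omega N ^ k * complex_of_real t) ^ N = complex_of_real (t ^ N)" for k
    using omega_pow_N[OF N, of k] by (simp add: power_mult_distrib)
  have "(\<Sum>k<N. R (omega N ^ k * complex_of_real t) (w - complex_of_real (t ^ N) *\<^sub>C (x ^^ N) w))
      = (\<Sum>k<N. \<Sum>j<N. (omega N ^ k * complex_of_real t) ^ j *\<^sub>C (x ^^ j) w)"
  proof (rule sum.cong[OF refl])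
    fix k assume "k \<in> {..<N}"
    show "R (omega N ^ k * complex_of_real t) (w - complex_of_real (t ^ N) *\<^sub>C (x ^^ N) w) =
         (\<Sum>j<N. (omega N ^ k * complex_of_real t) ^ j *\<^sub>C (x ^^ j) w)"
      using R_S[where \<mu>="omega N ^ k * complex_of_real t" and N=N and w=w, OF cmod_wt[OF t]] pw[of k]
      by simp
  qed
  also have "\<dots> = (\<Sum>j<N. \<Sum>k<N. (omega N ^ k * complex_of_real t) ^ j *\<^sub>C (x ^^ j) w)"
    by (rule sum.swap)
  also have "\<dots> = (\<Sum>j<N. ((\<Sum>k<N. (omega N ^ k) ^ j) * complex_of_real t ^ j) *\<^sub>C (x ^^ j) w)"
    by (simp add: scaleC_sum_left sum_distrib_right power_mult_distrib)
  also have "\<dots> = of_nat N *\<^sub>C w"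
  proof -
    obtain m where m: "N = Suc m" using N not0_implies_Suc by blast
    define c where "c j = (\<Sum>k<N. (omega N ^ k) ^ j) * complex_of_real t ^ j" for j
    have z: "c (Suc j) = 0" if "j < m" for j
      using omega_sum[of "Suc j" N] that m by (simp add: c_def)
    have "(\<Sum>j<N. c j *\<^sub>C (x ^^ j) w) = c 0 *\<^sub>C (x ^^ 0) w + (\<Sum>j<m. c (Suc j) *\<^sub>C (x ^^ Suc j) w)"
      by (simp only: m sum.lessThan_Suc_shift)
    also have "(\<Sum>j<m. c (Suc j) *\<^sub>C (x ^^ Suc j) w) = 0"
      by (rule sum.neutral) (simp add: z)
    also have "c 0 = of_nat N" by (simp add: c_def)
    finally show ?thesis by (simp add: c_def)
  qed
  finally show ?thesis using N by (simp add: H_def scaleC_of_real[symmetric] scaleC_scaleC)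
qed

lemma H_bclin: "0 \<le> t \<Longrightarrow> t \<le> 1 \<Longrightarrow> bclin (H N t)"
  unfolding H_def[abs_def]
  by (intro bclin_scaleR_fun bclin_sum_fun bR cmod_wt)

lemma H_comm: "0 \<le> t \<Longrightarrow> t \<le> 1 \<Longrightarrow> H N t ((x ^^ N) v) = (x ^^ N) (H N t v)"
  using bclin_funpow[OF bx, of N]
  by (simp add: H_def Rcomm_pow cmod_wt bclin_scaleR bclin_sum)

lemma H_right:
  assumes N: "0 < N" and t: "0 \<le> t" "t \<le> 1"
  shows "H N t w - complex_of_real (t ^ N) *\<^sub>C (x ^^ N) (H N t w) = w"
proof -
  have "H N t w - complex_of_real (t ^ N) *\<^sub>C (x ^^ N) (H N t w)
      = H N t (w - complex_of_real (t ^ N) *\<^sub>C (x ^^ N) w)"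
    using H_bclin[OF t] H_comm[OF t] by (simp add: bclin_diff bclin_C)
  thus ?thesis using H_left[OF assms] by simp
qed

lemma H_zero: "0 < N \<Longrightarrow> H N 0 v = v"
  by (simp add: H_def R0 sum_constant_scaleR)

definition Mb where "Mb = (SOME M. M \<ge> 1 \<and> (\<forall>\<mu>. cmod \<mu> \<le> 1 \<longrightarrow> onorm (R \<mu>) \<le> M))"

lemma Mb: "Mb \<ge> 1" "cmod \<mu> \<le> 1 \<Longrightarrow> onorm (R \<mu>) \<le> Mb"
  using someI_ex[OF R_bound] unfolding Mb_def by auto

lemma R_norm: "cmod \<mu> \<le> 1 \<Longrightarrow> norm (R \<mu> v) \<le> Mb * norm v"
  by (meson Mb(2) bR bclin_onorm mult_right_mono norm_ge_zero order_trans)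

definition Lc where "Lc = Mb * Mb * onorm x"

lemma Lc_nn: "0 \<le> Lc"
  using Mb(1) bclin_onorm_nn[OF bx] by (simp add: Lc_def)

lemma R_lip:
  assumes "cmod \<mu> \<le> 1" "cmod \<nu> \<le> 1"
  shows "norm (R \<mu> v - R \<nu> v) \<le> Lc * cmod (\<mu> - \<nu>) * norm v"
proof -
  have "norm (R \<mu> v - R \<nu> v) \<le> cmod (\<mu> - \<nu>) * onorm (R \<nu>) * onorm x * norm (R \<mu> v)"
    by (rule Rdiff_bound[OF assms])
  also have "\<dots> \<le> cmod (\<mu> - \<nu>) * Mb * onorm x * (Mb * norm v)"
    using Mb(2)[OF assms(2)] R_norm[OF assms(1)] bclin_onorm_nn[OF bx] bclin_onorm_nn[OF bR[OF assms(2)]]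
    by (intro mult_mono) auto
  finally show ?thesis by (simp add: Lc_def algebra_simps)
qed

lemma H_norm:
  assumes "0 < N" "0 \<le> t" "t \<le> 1"
  shows "norm (H N t v) \<le> Mb * norm v"
proof -
  have "norm (\<Sum>k<N. R (omega N ^ k * complex_of_real t) v) \<le> (\<Sum>k<N. Mb * norm v)"
    by (rule order_trans[OF norm_sum sum_mono]) (intro R_norm cmod_wt assms)
  thus ?thesis using assms by (simp add: H_def divide_simps mult_ac)
qed

lemma H_lip:
  assumes "0 < N" "0 \<le> t" "t \<le> 1" "0 \<le> t'" "t' \<le> 1"
  shows "norm (H N t v - H N t' v) \<le> Lc * \<bar>t - t'\<bar> * norm v"
proof -
  have "H N t v - H N t' v = (1 / real N) *\<^sub>R
      (\<Sum>k<N. R (omega N ^ k * complex_of_real t) v - R (omega N ^ k * complex_of_real t') v)"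
    by (simp add: H_def sum_subtractf scaleR_diff_right)
  moreover have "norm (\<Sum>k<N. R (omega N ^ k * complex_of_real t) v - R (omega N ^ k * complex_of_real t') v)
     \<le> (\<Sum>k<N. Lc * \<bar>t - t'\<bar> * norm v)"
  proof (rule order_trans[OF norm_sum sum_mono])
    fix k
    have "cmod (omega N ^ k * complex_of_real t - omega N ^ k * complex_of_real t') = \<bar>t - t'\<bar>"
      by (simp add: right_diff_distrib[symmetric] norm_mult, metis norm_of_real of_real_diff)
    thus "norm (R (omega N ^ k * complex_of_real t) v - R (omega N ^ k * complex_of_real t') v)
        \<le> Lc * \<bar>t - t'\<bar> * norm v"
      using R_lip[of "omega N ^ k * complex_of_real t" "omega N ^ k * complex_of_real t'" v]
        cmod_wt[of t N k] cmod_wt[of t' N k] assms by simp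
  qed
  ultimately show ?thesis using assms by (simp add: divide_simps mult_ac)
qed


end


lemma onorm_diff_abs:
  assumes "bounded_linear f" "bounded_linear g"
  shows "\<bar>onorm f - onorm g\<bar> \<le> onorm (\<lambda>v. f v - g v)"
proof -
  have "onorm f \<le> onorm g + onorm (\<lambda>v. f v - g v)"
    using onorm_triangle[OF bounded_linear_sub[OF assms(1) assms(2)] assms(2)] by simp
  moreover have "onorm g \<le> onorm f + onorm (\<lambda>v. f v - g v)"
  proof -
    have "onorm g \<le> onorm f + onorm (\<lambda>v. g v - f v)"
      using onorm_triangle[OF bounded_linear_sub[OF assms(2) assms(1)] assms(1)] by simp
    moreover have "onorm (\<lambda>v. g v - f v) = onorm (\<lambda>v. f v - g v)"
      using onorm_neg[of "\<lambda>v. f v - g v"] by simp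
    ultimately show ?thesis by simp
  qed
  ultimately show ?thesis by (simp add: abs_le_iff)
qed

lemma lipschitz_cont:
  fixes f :: "real \<Rightarrow> real"
  assumes "0 \<le> L" "\<And>t t'. t \<in> S \<Longrightarrow> t' \<in> S \<Longrightarrow> \<bar>f t - f t'\<bar> \<le> L * \<bar>t - t'\<bar>"
  shows "continuous_on S f"
  unfolding continuous_on_iff
proof (intro ballI allI impI)
  fix t and e :: real assume t: "t \<in> S" and e: "0 < e"
  show "\<exists>d>0. \<forall>t'\<in>S. dist t' t < d \<longrightarrow> dist (f t') (f t) < e"
  proof (intro exI[of _ "e / (L + 1)"] conjI ballI impI)
    show "0 < e / (L + 1)" using e assms(1) by simp
    fix t' assume t': "t' \<in> S" and d: "dist t' t < e / (L + 1)"
    have "\<bar>f t' - f t\<bar> \<le> L * \<bar>t' - t\<bar>" using assms(2) t t' by blast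
    also have "\<dots> \<le> (L + 1) * \<bar>t' - t\<bar>" by (simp add: mult_right_mono)
    also have "\<dots> < (L + 1) * (e / (L + 1))"
      using d assms(1) by (intro mult_strict_left_mono) (auto simp: dist_real_def)
    also have "\<dots> = e" using assms(1) by simp
    finally show "dist (f t') (f t) < e" by (simp add: dist_real_def)
  qed
qed

lemma pow_half: "1 \<le> N \<Longrightarrow> (1 - 1 / real N) ^ N \<le> 1 / 2"
proof -
  assume N: "1 \<le> N"
  have "(1 - 1 / real N) ^ N \<le> exp (- 1 / real N) ^ N"
    using N exp_ge_add_one_self[of "- 1 / real N"] by (intro power_mono) (auto simp: field_simps)
  also have "\<dots> = exp (real N * (- 1 / real N))" by (metis exp_of_nat_mult)
  also have "\<dots> = exp (- 1)" using N by simp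
  also have "\<dots> \<le> 1 / 2"
  proof -
    have "2 \<le> exp (1::real)" using exp_ge_add_one_self[of "1::real"] by simp
    thus ?thesis by (simp add: exp_minus field_simps)
  qed
  finally show ?thesis .
qed

context resolv begin

lemma main: "\<exists>N0. \<forall>N\<ge>N0. \<forall>v. norm ((x ^^ N) v) \<le> norm v"
proof (intro exI allI impI)
  fix N assume NN: "nat \<lceil>8 * (Mb + 3) * Lc\<rceil> + 2 \<le> N"
  have N2: "2 \<le> N" and N0: "0 < N" using NN by auto
  have Nb: "8 * (Mb + 3) * Lc \<le> real N" using NN by linarith
  define \<delta> where "\<delta> = (Mb + 3) * Lc / real N"
  have d0: "0 \<le> \<delta>" using Lc_nn Mb(1) by (simp add: \<delta>_def)
  have d8: "\<delta> \<le> 1/8" using Nb N0 by (simp add: \<delta>_def field_simps)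
  define s where "s = 1 - 1 / real N"
  define \<theta> where "\<theta> = s ^ N"
  have s01: "0 \<le> s" "s \<le> 1" using N0 by (auto simp: s_def field_simps)
  have th: "0 \<le> \<theta>" "\<theta> \<le> 1/2" using s01 pow_half[of N] N0 by (auto simp: \<theta>_def s_def)
  define y where "y = x ^^ N"
  have idem: "norm (H N t (H N t v) - H N t v) \<le> \<delta> * norm v" if t: "0 \<le> t" "t \<le> 1" for t v
  proof -
    define t' where "t' = s * t"
    have t': "0 \<le> t'" "t' \<le> 1" using t s01 by (auto simp: t'_def mult_le_one)
    have tt: "\<bar>t - t'\<bar> \<le> 1 / real N" using t N0 by (simp add: t'_def s_def field_simps)
    define u where "u = H N t v"
    have hr: "u - complex_of_real (t ^ N) *\<^sub>C y u = v" using H_right[OF N0 t] by (simp add: u_def y_def)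
    have "complex_of_real (t' ^ N) *\<^sub>C y u = \<theta> *\<^sub>R (complex_of_real (t ^ N) *\<^sub>C y u)"
      by (simp add: t'_def \<theta>_def power_mult_distrib scaleR_scaleC scaleC_scaleC mult.commute)
    also have "\<dots> = \<theta> *\<^sub>R (u - v)" using hr by (metis diff_diff_eq2 diff_add_cancel add_diff_cancel_left')
    finally have "u - complex_of_real (t' ^ N) *\<^sub>C y u = v + (1 - \<theta>) *\<^sub>R (u - v)"
      by (simp add: algebra_simps)
    hence "u = H N t' (v + (1 - \<theta>) *\<^sub>R (u - v))"
      using H_left[OF N0 t', of u] by (simp add: y_def)
    also have "\<dots> = H N t' v + (1 - \<theta>) *\<^sub>R H N t' (u - v)"
      using H_bclin[OF t'] by (simp add: bclin_add bclin_scaleR)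
    finally have "u = H N t' v + (1 - \<theta>) *\<^sub>R H N t' (u - v)" .
    hence eq: "(1 - \<theta>) *\<^sub>R H N t' (u - v) = u - H N t' v" by (metis add_diff_cancel_left')
    have "(1 - \<theta>) * norm (H N t' (u - v)) = norm (H N t v - H N t' v)"
    proof -
      have a: "norm ((1 - \<theta>) *\<^sub>R H N t' (u - v)) = \<bar>1 - \<theta>\<bar> * norm (H N t' (u - v))"
        by (rule norm_scaleR)
      have b: "\<bar>1 - \<theta>\<bar> = 1 - \<theta>" using th by simp
      have "(1 - \<theta>) * norm (H N t' (u - v)) = \<bar>1 - \<theta>\<bar> * norm (H N t' (u - v))" using b by simp
      also have "\<dots> = norm ((1 - \<theta>) *\<^sub>R H N t' (u - v))" by (rule a[symmetric])
      also have "\<dots> = norm (u - H N t' v)" by (simp only: eq)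
      finally show ?thesis by (simp only: u_def)
    qed
    also have "\<dots> \<le> Lc * \<bar>t - t'\<bar> * norm v" by (rule H_lip[OF N0 t t'])
    also have "\<dots> \<le> Lc * (1 / real N) * norm v"
      using tt Lc_nn by (intro mult_right_mono mult_left_mono) auto
    finally have a1: "(1 - \<theta>) * norm (H N t' (u - v)) \<le> Lc / real N * norm v" by simp
    have a2: "norm (H N t' (u - v)) \<le> 2 * (Lc / real N * norm v)"
    proof -
      have "(1/2) * norm (H N t' (u - v)) \<le> (1 - \<theta>) * norm (H N t' (u - v))"
        using th by (intro mult_right_mono) auto
      thus ?thesis using a1 by linarith
    qed
    have uv: "norm (u - v) \<le> (Mb + 1) * norm v"
    proof -
      have "norm (u - v) \<le> norm u + norm v" by (rule norm_triangle_ineq4)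
      also have "\<dots> \<le> Mb * norm v + norm v" using H_norm[OF N0 t] by (simp add: u_def)
      finally show ?thesis by (simp add: algebra_simps)
    qed
    have a3: "norm (H N t (u - v) - H N t' (u - v)) \<le> Lc / real N * ((Mb + 1) * norm v)"
    proof -
      have "norm (H N t (u - v) - H N t' (u - v)) \<le> Lc * \<bar>t - t'\<bar> * norm (u - v)"
        by (rule H_lip[OF N0 t t'])
      also have "\<dots> \<le> Lc * (1 / real N) * ((Mb + 1) * norm v)"
        using tt uv Lc_nn by (intro mult_mono) auto
      finally show ?thesis by simp
    qed
    have "norm (H N t (u - v)) \<le> norm (H N t' (u - v)) + norm (H N t (u - v) - H N t' (u - v))"
      by (metis add.commute diff_add_cancel norm_triangle_ineq)
    also have "\<dots> \<le> 2 * (Lc / real N * norm v) + Lc / real N * ((Mb + 1) * norm v)"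
      using a2 a3 by linarith
    also have "\<dots> = \<delta> * norm v" by (simp add: \<delta>_def algebra_simps add_divide_distrib)
    finally show ?thesis using H_bclin[OF t] by (simp add: bclin_diff u_def)
  qed
  define D where "D t v = v - H N t v" for t v
  define d where "d t = onorm (D t)" for t
  have bD: "bclin (D t)" if "0 \<le> t" "t \<le> 1" for t
    unfolding D_def[abs_def] by (intro bclin_minus bclin_id H_bclin that)
  have dq: "d t \<le> d t * d t + \<delta>" if t: "0 \<le> t" "t \<le> 1" for t
  proof -
    have dn: "0 \<le> d t" using bclin_onorm_nn[OF bD[OF t]] by (simp add: d_def)
    show ?thesis unfolding d_def
    proof (rule onorm_le_nn)
      show "0 \<le> onorm (D t) * onorm (D t) + \<delta>" using dn d0 by (simp add: d_def)
      fix v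
      have e: "D t (D t v) - D t v = H N t (H N t v) - H N t v"
        using H_bclin[OF t] by (simp add: D_def bclin_diff)
      have "norm (D t v) \<le> norm (D t (D t v)) + norm (D t (D t v) - D t v)"
        using norm_triangle_ineq4[of "D t (D t v)" "D t (D t v) - D t v"] by simp
      also have "\<dots> \<le> d t * (d t * norm v) + \<delta> * norm v"
      proof (intro add_mono)
        have "norm (D t (D t v)) \<le> d t * norm (D t v)" using bclin_onorm[OF bD[OF t]] d_def by simp
        also have "\<dots> \<le> d t * (d t * norm v)"
          using bclin_onorm[OF bD[OF t]] dn d_def by (intro mult_left_mono) auto
        finally show "norm (D t (D t v)) \<le> d t * (d t * norm v)" .
        show "norm (D t (D t v) - D t v) \<le> \<delta> * norm v" using e idem[OF t] by simp
      qed
      finally show "norm (D t v) \<le> (onorm (D t) * onorm (D t) + \<delta>) * norm v"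
        by (simp add: d_def algebra_simps)
    qed
  qed
  have dcont: "continuous_on {0..1} d"
  proof (rule lipschitz_cont[OF Lc_nn])
    fix t t' assume t: "t \<in> {0..1::real}" and t': "t' \<in> {0..1::real}"
    have "\<bar>d t - d t'\<bar> \<le> onorm (\<lambda>v. D t v - D t' v)"
      unfolding d_def using bD t t' by (intro onorm_diff_abs bclin_bl) auto
    also have "\<dots> \<le> Lc * \<bar>t - t'\<bar>"
    proof (rule onorm_le_nn)
      show "0 \<le> Lc * \<bar>t - t'\<bar>" using Lc_nn by simp
      fix v
      have "norm (D t v - D t' v) = norm (H N t' v - H N t v)" by (simp add: D_def)
      also have "\<dots> \<le> Lc * \<bar>t' - t\<bar> * norm v" using t t' by (intro H_lip N0) auto
      finally show "norm (D t v - D t' v) \<le> Lc * \<bar>t - t'\<bar> * norm v" by (simp add: abs_minus_commute)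
    qed
    finally show "\<bar>d t - d t'\<bar> \<le> Lc * \<bar>t - t'\<bar>" .
  qed
  have dzero: "d 0 = 0"
  proof -
    have "D 0 = (\<lambda>v. 0)" by (rule ext) (simp add: D_def H_zero[OF N0])
    thus ?thesis by (simp add: d_def onorm_zero)
  qed
  have d1: "d 1 \<le> 2 * \<delta>"
  proof (rule ccontr)
    assume c: "\<not> d 1 \<le> 2 * \<delta>"
    define yy where "yy = min (d 1) (1/2)"
    have "\<exists>t. 0 \<le> t \<and> t \<le> 1 \<and> d t = yy"
      by (rule IVT'[OF _ _ _ dcont]) (use dzero c d0 in \<open>auto simp: yy_def\<close>)
    then obtain t where t: "0 \<le> t" "t \<le> 1" "d t = yy" by blast
    have yy: "2 * \<delta> < yy" "yy \<le> 1/2" using c d8 by (auto simp: yy_def)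
    have "yy \<le> yy * yy + \<delta>" using dq[OF t(1,2)] t(3) by simp
    moreover have "yy * yy \<le> yy * (1/2)" using yy d0 by (intro mult_left_mono) auto
    ultimately show False using yy by linarith
  qed
  fix v
  have one: "0 \<le> (1::real)" "(1::real) \<le> 1" by auto
  define w where "w = v - y v"
  have Hw: "H N 1 w = v" using H_left[OF N0 one, of v] by (simp add: w_def y_def)
  have "y v = - D 1 w" using w_def Hw by (simp add: D_def)
  hence "norm (y v) = norm (D 1 w)" by simp
  also have "\<dots> \<le> d 1 * norm w" using bclin_onorm[OF bD[OF one]] by (simp add: d_def)
  also have "\<dots> \<le> d 1 * (norm v + norm (y v))"
    using bclin_onorm_nn[OF bD[OF one]] by (intro mult_left_mono) (auto simp: w_def d_def norm_triangle_ineq4)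
  finally have ny: "norm (y v) \<le> d 1 * norm v + d 1 * norm (y v)" by (simp add: algebra_simps)
  have d14: "d 1 \<le> 1/4" using d1 d8 by linarith
  have "d 1 * norm v \<le> (1/4) * norm v" "d 1 * norm (y v) \<le> (1/4) * norm (y v)"
    by (rule mult_right_mono[OF d14 norm_ge_zero])+
  hence "norm (y v) \<le> norm v" using ny norm_ge_zero[of v] by linarith
  thus "norm ((x ^^ N) v) \<le> norm v" by (simp add: y_def)
qed

end

lemma quasi_decay:
  fixes Q :: "'a::complex_banach \<Rightarrow> 'a"
  assumes bQ: "bclin Q" and qn: "quasinilpotent Q" and r: "0 < r"
  shows "\<exists>N0. \<forall>N\<ge>N0. \<forall>v. norm ((Q ^^ N) v) \<le> r ^ N * norm v"
proof -
  define x where "x v = complex_of_real (1 / r) *\<^sub>C Q v" for v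
  have bx: "bclin x" unfolding x_def[abs_def] by (rule bclin_scaleC[OF bQ])
  define Bi where "Bi z = (SOME B. bclin B \<and> (\<lambda>v. z *\<^sub>C v - Q v) \<circ> B = id \<and> B \<circ> (\<lambda>v. z *\<^sub>C v - Q v) = id)" for z
  have Bi: "bclin (Bi z) \<and> (\<lambda>v. z *\<^sub>C v - Q v) \<circ> Bi z = id \<and> Bi z \<circ> (\<lambda>v. z *\<^sub>C v - Q v) = id"
    if "z \<noteq> 0" for z
  proof -
    have "z \<notin> op_spectrum Q" using qn that by (auto simp: quasinilpotent_def)
    hence "op_invertible (\<lambda>v. z *\<^sub>C v - Q v)" by (simp add: op_spectrum_def)
    thus ?thesis unfolding op_invertible_def Bi_def by (rule someI_ex)
  qed
  define R where "R \<mu> = (if \<mu> = 0 then (\<lambda>v. v) else (\<lambda>w. Bi (complex_of_real r / \<mu>) ((complex_of_real r / \<mu>) *\<^sub>C w)))" for \<mu>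
  have key: "v - \<mu> *\<^sub>C x v = (\<mu> / complex_of_real r) *\<^sub>C ((complex_of_real r / \<mu>) *\<^sub>C v - Q v)"
    if "\<mu> \<noteq> 0" for \<mu> v
    using that r by (simp add: x_def scaleC_diff_right scaleC_scaleC)
  interpret resolv x R
  proof
    show "bclin x" by (rule bx)
    fix \<mu> :: complex and v assume "cmod \<mu> \<le> 1"
    show "bclin (R \<mu>)"
    proof (cases "\<mu> = 0")
      case True then show ?thesis by (simp add: R_def bclin_id)
    next
      case False
      hence z: "complex_of_real r / \<mu> \<noteq> 0" using r by simp
      have "bclin (\<lambda>w. Bi (complex_of_real r / \<mu>) ((complex_of_real r / \<mu>) *\<^sub>C w))"
        using Bi[OF z] by (intro bclin_comp[OF _ bclin_scaleC[OF bclin_id]]) blast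
      thus ?thesis using False by (simp add: R_def)
    qed
    show "R \<mu> v - \<mu> *\<^sub>C x (R \<mu> v) = v"
    proof (cases "\<mu> = 0")
      case True then show ?thesis by (simp add: R_def)
    next
      case False
      define z where "z = complex_of_real r / \<mu>"
      hence z: "z \<noteq> 0" using r False by simp
      have "R \<mu> v - \<mu> *\<^sub>C x (R \<mu> v) = (\<mu> / complex_of_real r) *\<^sub>C (z *\<^sub>C R \<mu> v - Q (R \<mu> v))"
        using key[OF False] z_def by simp
      also have "z *\<^sub>C R \<mu> v - Q (R \<mu> v) = z *\<^sub>C v"
        using Bi[OF z] False by (simp add: R_def z_def[symmetric] fun_eq_iff)
      finally show ?thesis using False r by (simp add: scaleC_scaleC z_def)
    qed
    show "R \<mu> (v - \<mu> *\<^sub>C x v) = v"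
    proof (cases "\<mu> = 0")
      case True then show ?thesis by (simp add: R_def)
    next
      case False
      define z where "z = complex_of_real r / \<mu>"
      hence z: "z \<noteq> 0" using r False by simp
      have "R \<mu> (v - \<mu> *\<^sub>C x v) = Bi z (z *\<^sub>C ((\<mu> / complex_of_real r) *\<^sub>C (z *\<^sub>C v - Q v)))"
        using key[OF False] False by (simp add: R_def z_def)
      also have "\<dots> = Bi z (z *\<^sub>C v - Q v)"
        using False r by (simp add: scaleC_scaleC z_def)
      also have "\<dots> = v" using Bi[OF z] by (simp add: fun_eq_iff)
      finally show ?thesis .
    qed
  qed
  obtain N0 where N0: "\<forall>N\<ge>N0. \<forall>v. norm ((x ^^ N) v) \<le> norm v" using main by blast
  have xp: "(x ^^ n) v = complex_of_real ((1 / r) ^ n) *\<^sub>C (Q ^^ n) v" for n v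
  proof (induction n)
    case 0 then show ?case by simp
  next
    case (Suc n) then show ?case using bQ by (simp add: x_def bclin_C scaleC_scaleC mult.commute)
  qed
  show ?thesis
  proof (intro exI[of _ N0] allI impI)
    fix N v assume "N0 \<le> N"
    hence "norm ((x ^^ N) v) \<le> norm v" using N0 by blast
    moreover have "norm ((x ^^ N) v) = (1 / r) ^ N * norm ((Q ^^ N) v)"
      unfolding xp norm_scaleC norm_of_real using r by simp
    ultimately have "(1 / r) ^ N * norm ((Q ^^ N) v) \<le> norm v" by simp
    hence "r ^ N * ((1 / r) ^ N * norm ((Q ^^ N) v)) \<le> r ^ N * norm v"
      using r by (intro mult_left_mono) auto
    thus "norm ((Q ^^ N) v) \<le> r ^ N * norm v"
      using r by (simp add: power_one_over field_simps)
  qed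
qed


lemma H0_iff:
  "v \<in> quasinilpotent_part A \<longleftrightarrow> (\<forall>r>0. \<exists>N. \<forall>n\<ge>N. norm ((A ^^ n) v) \<le> r ^ n)"
proof
  assume "v \<in> quasinilpotent_part A"
  hence lim: "(\<lambda>n. norm ((A ^^ n) v) powr (1 / real n)) \<longlonglongrightarrow> 0"
    by (simp add: quasinilpotent_part_def)
  show "\<forall>r>0. \<exists>N. \<forall>n\<ge>N. norm ((A ^^ n) v) \<le> r ^ n"
  proof (intro allI impI)
    fix r :: real assume r: "0 < r"
    obtain N where N: "\<forall>n\<ge>N. norm (norm ((A ^^ n) v) powr (1 / real n) - 0) < r"
      using lim r unfolding LIMSEQ_iff by blast
    show "\<exists>N. \<forall>n\<ge>N. norm ((A ^^ n) v) \<le> r ^ n"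
    proof (intro exI[of _ "N + 1"] allI impI)
      fix n assume n: "N + 1 \<le> n"
      define a where "a = norm ((A ^^ n) v)"
      have lt: "a powr (1 / real n) < r" using N n by (auto simp: a_def)
      show "norm ((A ^^ n) v) \<le> r ^ n"
      proof (cases "a = 0")
        case True then show ?thesis using r by (simp add: a_def)
      next
        case False
        hence a0: "0 < a" by (simp add: a_def)
        have "a = (a powr (1 / real n)) ^ n"
          using a0 n by (simp add: powr_realpow[symmetric] powr_powr)
        also have "\<dots> \<le> r ^ n" using lt by (intro power_mono) auto
        finally show ?thesis by (simp add: a_def)
      qed
    qed
  qed
next
  assume H: "\<forall>r>0. \<exists>N. \<forall>n\<ge>N. norm ((A ^^ n) v) \<le> r ^ n"
  show "v \<in> quasinilpotent_part A"
    unfolding quasinilpotent_part_def mem_Collect_eq LIMSEQ_iff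
  proof (intro allI impI)
    fix e :: real assume e: "0 < e"
    obtain N where N: "\<forall>n\<ge>N. norm ((A ^^ n) v) \<le> (e/2) ^ n" using H e by (meson half_gt_zero)
    show "\<exists>no. \<forall>n\<ge>no. norm (norm ((A ^^ n) v) powr (1 / real n) - 0) < e"
    proof (intro exI[of _ "N + 1"] allI impI)
      fix n assume n: "N + 1 \<le> n"
      have "norm ((A ^^ n) v) powr (1 / real n) \<le> ((e/2) ^ n) powr (1 / real n)"
        using N n by (intro powr_mono2) auto
      also have "\<dots> = e / 2"
        using e n by (simp add: powr_realpow[symmetric] powr_powr)
      finally show "norm (norm ((A ^^ n) v) powr (1 / real n) - 0) < e" using e by simp
    qed
  qed
qed

lemma H0_const:
  assumes "\<forall>r>0. \<exists>N. \<forall>n\<ge>N. norm ((A ^^ n) v) \<le> K * r ^ n"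
  shows "v \<in> quasinilpotent_part A"
  unfolding H0_iff
proof (intro allI impI)
  fix r :: real assume r: "0 < r"
  obtain N where N: "\<forall>n\<ge>N. norm ((A ^^ n) v) \<le> K * (r/2) ^ n" using assms r by (meson half_gt_zero)
  obtain m where m: "K < 2 ^ m" using real_arch_pow[of 2 K] by auto
  show "\<exists>N. \<forall>n\<ge>N. norm ((A ^^ n) v) \<le> r ^ n"
  proof (intro exI[of _ "max N m"] allI impI)
    fix n assume n: "max N m \<le> n"
    have "K \<le> 2 ^ n" using m n by (meson less_le_trans max.boundedE one_le_numeral power_increasing less_imp_le)
    hence "K * (r/2) ^ n \<le> 2 ^ n * (r/2) ^ n" using r by (intro mult_right_mono) auto
    also have "\<dots> = r ^ n" by (simp add: power_mult_distrib[symmetric])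
    finally show "norm ((A ^^ n) v) \<le> r ^ n" using N n by force
  qed
qed

lemma H0_shift1:
  assumes "v \<in> quasinilpotent_part A" shows "A v \<in> quasinilpotent_part A"
  unfolding H0_iff
proof (intro allI impI)
  fix r :: real assume r: "0 < r"
  obtain N where N: "\<forall>n\<ge>N. norm ((A ^^ n) v) \<le> (min r 1) ^ n"
    using assms r unfolding H0_iff by (metis min_less_iff_conj zero_less_one)
  show "\<exists>N. \<forall>n\<ge>N. norm ((A ^^ n) (A v)) \<le> r ^ n"
  proof (intro exI[of _ N] allI impI)
    fix n assume n: "N \<le> n"
    have "norm ((A ^^ n) (A v)) = norm ((A ^^ Suc n) v)" by (simp only: funpow_Suc_right o_apply)
    also have "\<dots> \<le> (min r 1) ^ Suc n" using N[rule_format, of "Suc n"] n by linarith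
    also have "\<dots> \<le> (min r 1) ^ n" using r by (intro power_decreasing) auto
    also have "\<dots> \<le> r ^ n" using r by (intro power_mono) auto
    finally show "norm ((A ^^ n) (A v)) \<le> r ^ n" .
  qed
qed

lemma H0_shift2:
  assumes "A v \<in> quasinilpotent_part A" shows "v \<in> quasinilpotent_part A"
  unfolding H0_iff
proof (intro allI impI)
  fix r :: real assume r: "0 < r"
  define r' where "r' = min r 1"
  have r': "0 < r'" "r' \<le> 1" "r' \<le> r" using r by (auto simp: r'_def)
  obtain N where N: "\<forall>n\<ge>N. norm ((A ^^ n) (A v)) \<le> (r' * r') ^ n"
    using assms r' unfolding H0_iff by (meson mult_pos_pos)
  show "\<exists>N. \<forall>n\<ge>N. norm ((A ^^ n) v) \<le> r ^ n"
  proof (intro exI[of _ "N + 2"] allI impI)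
    fix m assume m: "N + 2 \<le> m"
    then obtain n where n: "m = Suc n" "N + 1 \<le> n" by (cases m) auto
    have "norm ((A ^^ m) v) = norm ((A ^^ n) (A v))" by (simp add: n funpow_Suc_right del: funpow.simps)
    also have "\<dots> \<le> (r' * r') ^ n" using N n by simp
    also have "\<dots> = r' ^ (n + n)" by (simp add: power_mult_distrib power_add)
    also have "\<dots> \<le> r' ^ m" using r' n by (intro power_decreasing) auto
    also have "\<dots> \<le> r ^ m" using r' by (intro power_mono) auto
    finally show "norm ((A ^^ m) v) \<le> r ^ m" .
  qed
qed

lemma K_const:
  assumes bA: "bclin A" and u: "u 0 = x" "\<forall>n. A (u (Suc n)) = u n" and c: "0 < c"
    and b: "\<forall>n. norm (u n) \<le> c ^ n * K"
  shows "x \<in> analytical_core A"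
proof (cases "x = 0")
  case True
  show ?thesis unfolding analytical_core_def
    by (rule CollectI, rule exI[of _ "\<lambda>n. 0"], rule exI[of _ 1]) (simp add: True bclin_zero[OF bA])
next
  case False
  hence nx: "0 < norm x" by simp
  define m where "m = max 1 (K / norm x)"
  have m1: "1 \<le> m" and mK: "K \<le> m * norm x" using nx by (auto simp: m_def field_simps max_def)
  show ?thesis unfolding analytical_core_def
  proof (rule CollectI, rule exI[of _ u], rule exI[of _ "c * m"], intro conjI allI)
    show "0 < c * m" using c m1 by simp
    show "u 0 = x" "\<And>n. A (u (Suc n)) = u n" using u by auto
    fix n
    show "norm (u n) \<le> (c * m) ^ n * norm x"
    proof (cases n)
      case 0 then show ?thesis using u by simp
    next
      case (Suc k)
      have "norm (u n) \<le> c ^ n * K" using b by blast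
      also have "\<dots> \<le> c ^ n * (m * norm x)" using mK c by (intro mult_left_mono) auto
      also have "m \<le> m ^ n" using m1 Suc by (metis One_nat_def Suc_le_eq power_increasing power_one_right zero_less_Suc)
      hence "c ^ n * (m * norm x) \<le> c ^ n * (m ^ n * norm x)"
        using c by (intro mult_left_mono mult_right_mono) auto
      finally show ?thesis by (simp add: power_mult_distrib)
    qed
  qed
qed

lemma K_image:
  assumes bA: "bclin A" and x: "x \<in> analytical_core A"
  shows "A x \<in> analytical_core A"
proof -
  obtain u c where c: "0 < c" and u: "u 0 = x" "\<forall>n. A (u (Suc n)) = u n"
    and b: "\<forall>n. norm (u n) \<le> c ^ n * norm x"
    using x unfolding analytical_core_def by blast
  define u' where "u' n = (case n of 0 \<Rightarrow> A x | Suc m \<Rightarrow> u m)" for n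
  define K where "K = max (norm (A x)) (norm x / c)"
  show ?thesis
  proof (rule K_const[OF bA, of u' _ c K])
    show "u' 0 = A x" by (simp add: u'_def)
    show "\<forall>n. A (u' (Suc n)) = u' n"
      using u by (auto simp: u'_def split: nat.split)
    show "0 < c" by fact
    show "\<forall>n. norm (u' n) \<le> c ^ n * K"
    proof
      fix n show "norm (u' n) \<le> c ^ n * K"
      proof (cases n)
        case 0 then show ?thesis by (simp add: u'_def K_def)
      next
        case (Suc m)
        have "norm (u' n) \<le> c ^ m * norm x" using b Suc by (simp add: u'_def)
        also have "\<dots> = c ^ n * (norm x / c)" using c Suc by simp
        also have "\<dots> \<le> c ^ n * K" using c by (intro mult_left_mono) (auto simp: K_def)
        finally show ?thesis .
      qed
    qed
  qed
qed

lemma zero_by_decay: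
  fixes a K :: real
  assumes "\<forall>n\<ge>N. a \<le> K * (1/2) ^ n"
  shows "a \<le> 0"
proof -
  have "(\<lambda>n. K * (1/2::real) ^ n) \<longlonglongrightarrow> K * 0"
    by (intro tendsto_mult tendsto_const LIMSEQ_power_zero) simp
  thus ?thesis using assms by (intro LIMSEQ_le_const[of "\<lambda>n. K * (1/2) ^ n"]) auto
qed

lemma proj_eq:
  assumes bE: "bclin E" and EE: "\<And>v. E (E v) = E v" and FF: "\<And>v. F (F v) = F v"
    and bF: "bclin F" and ker: "\<And>v. E v = 0 \<longleftrightarrow> F v = 0" and rng: "range E \<subseteq> range F"
  shows "E v = F v"
proof -
  obtain w where w: "E v = F w" using rng by blast
  have a: "F (E v) = E v" using w FF by simp
  have "E (v - E v) = 0" using bE EE by (simp add: bclin_diff)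
  hence "F (v - E v) = 0" using ker by blast
  hence "F v = F (E v)" using bF by (simp add: bclin_diff)
  thus ?thesis using a by simp
qed

lemma unif_bound:
  fixes T :: "nat \<Rightarrow> 'a::complex_banach \<Rightarrow> 'a"
  assumes bl: "\<And>n. bounded_linear (T n)" and pw: "\<And>v. \<exists>K. \<forall>n. norm (T n v) \<le> K"
  shows "\<exists>C. \<forall>n v. norm (T n v) \<le> C * norm v"
proof -
  define F where "F k = {v. \<forall>n. norm (T n v) \<le> real k}" for k :: nat
  have clF: "closed (F k)" for k
  proof -
    have "F k = (\<Inter>n. {v. norm (T n v) \<le> real k})" by (auto simp: F_def)
    moreover have "closed {v. norm (T n v) \<le> real k}" for n
      by (rule closed_Collect_le[OF continuous_on_norm[OF linear_continuous_on[OF bl]] continuous_on_const])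
    ultimately show ?thesis by auto
  qed
  have cover: "\<Union>(range F) = UNIV"
  proof -
    { fix v
      obtain K where K: "\<forall>n. norm (T n v) \<le> K" using pw by blast
      obtain k :: nat where "K \<le> real k" using real_arch_simple by blast
      hence "v \<in> F k" using K by (auto simp: F_def intro: order_trans)
      hence "v \<in> \<Union>(range F)" by blast }
    thus ?thesis by auto
  qed
  have "\<exists>k. interior (F k) \<noteq> {}"
  proof (rule ccontr)
    assume nk: "\<not> (\<exists>k. interior (F k) \<noteq> {})"
    have "euclidean interior_of \<Union>(range F) = {}"
    proof (rule Baire_category_alt)
      show "completely_metrizable_space (euclidean :: 'a topology) \<or>
        locally_compact_space (euclidean :: 'a topology) \<and> regular_space (euclidean :: 'a topology)"
        by (rule disjI1, rule completely_metrizable_space_euclidean)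
      show "countable (range F)" by simp
      fix S assume "S \<in> range F"
      then obtain k where S: "S = F k" by blast
      show "closedin euclidean S \<and> euclidean interior_of S = {}"
        using clF[of k] nk unfolding S closed_closedin[symmetric] by simp
    qed
    thus False using cover by simp
  qed
  then obtain k v0 where v0: "v0 \<in> interior (F k)" by blast
  obtain e where e: "0 < e" and ball0: "ball v0 e \<subseteq> interior (F k)"
    using openE[OF open_interior v0] by blast
  have ball: "ball v0 e \<subseteq> F k" using ball0 interior_subset by blast
  show ?thesis
  proof (intro exI[of _ "4 * real k / e"] allI)
    fix n v
    show "norm (T n v) \<le> 4 * real k / e * norm v"
    proof (cases "v = 0")
      case True then show ?thesis using bl[of n] by (simp add: linear_simps)
    next
      case False
      define w where "w = (e / (2 * norm v)) *\<^sub>R v"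
      have nw: "norm w = e / 2" using False e by (simp add: w_def)
      have "v0 + w \<in> F k" "v0 \<in> F k" using ball e nw by (auto simp: dist_norm)
      hence a: "norm (T n (v0 + w)) \<le> real k" "norm (T n v0) \<le> real k" by (auto simp: F_def)
      have "T n w = T n (v0 + w) - T n v0" using bl[of n] by (simp add: linear_simps)
      hence "norm (T n w) \<le> norm (T n (v0 + w)) + norm (T n v0)" by (simp add: norm_triangle_ineq4)
      hence "norm (T n w) \<le> 2 * real k" using a by linarith
      moreover have "T n w = (e / (2 * norm v)) *\<^sub>R T n v" using bl[of n] by (simp add: w_def linear_simps)
      ultimately have "(e / (2 * norm v)) * norm (T n v) \<le> 2 * real k" using e by simp
      thus ?thesis using e False by (simp add: field_simps)
    qed
  qed
qed


lemma KD_parts: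
  fixes A C :: "'a::complex_banach \<Rightarrow> 'a"
  assumes bA: "bclin A" and kd: "KD_inverse A C"
  shows "range (A \<circ> C) = analytical_core A" and "{x. (A \<circ> C) x = 0} = quasinilpotent_part A"
proof -
  have bC: "bclin C" using kd by (simp add: KD_inverse_def)
  have kdd: "C \<circ> A \<circ> C = C" using kd by (simp add: KD_inverse_def)
  have CAC: "C (A (C x)) = C x" for x using fun_cong[OF kdd, of x] by simp
  have AC: "A (C x) = C (A x)" for x using kd by (simp add: KD_inverse_def fun_eq_iff)
  have qn: "quasinilpotent (\<lambda>x. A (x - A (C x)))" using kd by (simp add: KD_inverse_def)
  define Q where "Q = (\<lambda>x. A (x - A (C x)))"
  have bQ: "bclin Q" unfolding Q_def by (intro bclin_comp[OF bA] bclin_minus bclin_id bclin_comp[OF bA bC])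
  have decay: "\<exists>N0. \<forall>N\<ge>N0. \<forall>v. norm ((Q ^^ N) v) \<le> r ^ N * norm v" if "0 < r" for r
    using quasi_decay[OF bQ qn[folded Q_def] that] .
  define c where "c = max (onorm C) 1"
  have c1: "1 \<le> c" and c0: "0 < c" by (auto simp: c_def)
  have Cpow: "norm ((C ^^ n) v) \<le> c ^ n * norm v" for n v
  proof -
    have "norm ((C ^^ n) v) \<le> onorm C ^ n * norm v" by (rule funpow_onorm[OF bC])
    also have "\<dots> \<le> c ^ n * norm v"
      using bclin_onorm_nn[OF bC] by (intro mult_right_mono power_mono) (auto simp: c_def)
    finally show ?thesis .
  qed
  have EE: "A (C (A (C x))) = A (C x)" for x using CAC by simp
  have EA: "A (C (A v)) = A (A (C v))" for v using AC by simp
  define P where "P v = v - A (C v)" for v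
  have bP: "bclin P" unfolding P_def[abs_def] by (intro bclin_minus bclin_id bclin_comp[OF bA bC])
  have PA: "P (A v) = A (P v)" for v using bA by (simp add: P_def EA bclin_diff)
  have PP: "P (P v) = P v" for v
    using bA bC by (simp add: P_def bclin_diff EE)
  have QP: "Q v = A (P v)" for v by (simp add: Q_def P_def)
  show "range (A \<circ> C) = analytical_core A"
  proof
    show "range (A \<circ> C) \<subseteq> analytical_core A"
    proof
      fix x assume "x \<in> range (A \<circ> C)"
      then obtain w where w: "x = A (C w)" by auto
      have Ex: "A (C x) = x" using w EE by simp
      have Eu: "A (C ((C ^^ n) x)) = (C ^^ n) x" for n
      proof (cases n)
        case 0 then show ?thesis using Ex by simp
      next
        case (Suc m)
        have "A (C (C ((C ^^ m) x))) = C (A (C ((C ^^ m) x)))" by (rule AC)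
        also have "\<dots> = C ((C ^^ m) x)" by (rule CAC)
        finally show ?thesis using Suc by simp
      qed
      show "x \<in> analytical_core A" unfolding analytical_core_def
      proof (rule CollectI, rule exI[of _ "\<lambda>n. (C ^^ n) x"], rule exI[of _ c], intro conjI allI)
        show "0 < c" by (rule c0)
        show "(C ^^ 0) x = x" by simp
        fix n
        show "A ((C ^^ Suc n) x) = (C ^^ n) x" using Eu[of n] by simp
        show "norm ((C ^^ n) x) \<le> c ^ n * norm x" by (rule Cpow)
      qed
    qed
    show "analytical_core A \<subseteq> range (A \<circ> C)"
    proof
      fix x assume "x \<in> analytical_core A"
      then obtain u c' where c': "0 < c'" and u: "u 0 = x" "\<forall>n. A (u (Suc n)) = u n"
        and b: "\<forall>n. norm (u n) \<le> c' ^ n * norm x"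
        unfolding analytical_core_def by blast
      have rep: "P x = (Q ^^ n) (P (u n))" for n
      proof (induction n)
        case 0 then show ?case using u by simp
      next
        case (Suc n)
        have "(Q ^^ Suc n) (P (u (Suc n))) = (Q ^^ n) (Q (P (u (Suc n))))"
          by (simp only: funpow_Suc_right o_apply)
        also have "Q (P (u (Suc n))) = P (u n)" using u by (simp add: QP PP PA[symmetric])
        finally show ?case using Suc by simp
      qed
      obtain N0 where N0: "\<forall>N\<ge>N0. \<forall>v. norm ((Q ^^ N) v) \<le> (1 / (2 * c')) ^ N * norm v"
        using decay[of "1 / (2 * c')"] c' by auto
      have "norm (P x) \<le> (onorm P * norm x) * (1/2) ^ n" if "N0 \<le> n" for n
      proof -
        have "norm (P x) \<le> (1 / (2 * c')) ^ n * norm (P (u n))" using N0 that rep[of n] by simp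
        also have "\<dots> \<le> (1 / (2 * c')) ^ n * (onorm P * (c' ^ n * norm x))"
        proof (intro mult_left_mono)
          have "norm (P (u n)) \<le> onorm P * norm (u n)" by (rule bclin_onorm[OF bP])
          also have "\<dots> \<le> onorm P * (c' ^ n * norm x)"
            using b bclin_onorm_nn[OF bP] by (intro mult_left_mono) auto
          finally show "norm (P (u n)) \<le> onorm P * (c' ^ n * norm x)" .
        qed (use c' in simp)
        also have "\<dots> = (onorm P * norm x) * ((1 / (2 * c')) ^ n * c' ^ n)" by (simp add: algebra_simps)
        also have "(1 / (2 * c')) ^ n * c' ^ n = (1/2) ^ n"
          using c' by (simp add: power_mult_distrib[symmetric])
        finally show ?thesis .
      qed
      hence "norm (P x) \<le> 0" by (intro zero_by_decay[of N0]) blast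
      hence "x = A (C x)" by (simp add: P_def)
      thus "x \<in> range (A \<circ> C)" by (metis comp_apply rangeI)
    qed
  qed
  show "{x. (A \<circ> C) x = 0} = quasinilpotent_part A"
  proof
    show "{x. (A \<circ> C) x = 0} \<subseteq> quasinilpotent_part A"
    proof
      fix x assume "x \<in> {x. (A \<circ> C) x = 0}"
      hence x0: "A (C x) = 0" by simp
      have it: "(Q ^^ n) x = (A ^^ n) x \<and> A (C ((A ^^ n) x)) = 0" for n
      proof (induction n)
        case 0 then show ?case using x0 by simp
      next
        case (Suc n)
        hence a: "(Q ^^ n) x = (A ^^ n) x" and b: "A (C ((A ^^ n) x)) = 0" by auto
        have "(Q ^^ Suc n) x = (A ^^ Suc n) x" using a b by (simp add: Q_def)
        moreover have "A (C ((A ^^ Suc n) x)) = 0" using b bA by (simp add: EA bclin_zero)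
        ultimately show ?case by simp
      qed
      show "x \<in> quasinilpotent_part A"
      proof (rule H0_const[where K="norm x"], intro allI impI)
        fix r :: real assume r: "0 < r"
        obtain N0 where N0: "\<forall>N\<ge>N0. \<forall>v. norm ((Q ^^ N) v) \<le> r ^ N * norm v" using decay r by blast
        show "\<exists>N. \<forall>n\<ge>N. norm ((A ^^ n) x) \<le> norm x * r ^ n"
          using N0 it by (metis mult.commute)
      qed
    qed
    show "quasinilpotent_part A \<subseteq> {x. (A \<circ> C) x = 0}"
    proof
      fix x assume x: "x \<in> quasinilpotent_part A"
      have it: "A (C y) = (C ^^ Suc n) ((A ^^ Suc n) y)" for n y
      proof (induction n arbitrary: y)
        case 0 then show ?case by (simp add: AC)
      next
        case (Suc n)
        have "A (C y) = A (C (A (C y)))" by (simp add: EE)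
        also have "\<dots> = (C ^^ Suc n) ((A ^^ Suc n) (A (C y)))" by (rule Suc)
        also have "(A ^^ Suc n) (A (C y)) = A (C ((A ^^ Suc n) y))"
          by (rule funpow_comm[symmetric]) (rule EA)
        also have "\<dots> = C ((A ^^ Suc (Suc n)) y)" by (simp add: AC)
        finally show ?case by (simp only: funpow_Suc_right o_apply)
      qed
      obtain N where N: "\<forall>n\<ge>N. norm ((A ^^ n) x) \<le> (1 / (2 * c)) ^ n"
        using x c0 unfolding H0_iff by (meson divide_pos_pos mult_pos_pos zero_less_numeral zero_less_one)
      have "norm (A (C x)) \<le> 1 * (1/2) ^ n" if "N \<le> n" for n
      proof -
        have "norm (A (C x)) \<le> c ^ Suc n * norm ((A ^^ Suc n) x)" unfolding it[where n=n and y=x] by (rule Cpow)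
        also have "\<dots> \<le> c ^ Suc n * (1 / (2 * c)) ^ Suc n"
          using N[rule_format, of "Suc n"] that c0 by (intro mult_left_mono) auto
        also have "\<dots> = (1/2) ^ Suc n" using c0 by (simp add: power_mult_distrib[symmetric])
        also have "\<dots> \<le> 1 * (1/2) ^ n" by (simp add: power_le_one)
        finally show ?thesis .
      qed
      hence "norm (A (C x)) \<le> 0" by (intro zero_by_decay[of N]) blast
      thus "x \<in> {x. (A \<circ> C) x = 0}" by simp
    qed
  qed
qed


lemma KD_mary:
  assumes bA: "bclin A" and kd: "KD_inverse A C"
  shows "mary_inverse_along A (A \<circ> C) C"
proof -
  have bC: "bclin C" using kd by (simp add: KD_inverse_def)
  have kdd: "C \<circ> A \<circ> C = C" using kd by (simp add: KD_inverse_def)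
  have CAC: "C (A (C x)) = C x" for x using fun_cong[OF kdd, of x] by simp
  have ACe: "A \<circ> C = C \<circ> A" using kd by (simp add: KD_inverse_def)
  have AC: "A (C x) = C (A x)" for x using fun_cong[OF ACe, of x] by simp
  have e1: "C = A \<circ> C \<circ> C"
  proof (rule ext)
    fix x
    have "A (C (C x)) = C (A (C x))" by (rule AC)
    thus "C x = (A \<circ> C \<circ> C) x" by (simp add: CAC)
  qed
  have e3: "C = C \<circ> (A \<circ> C)" by (rule ext) (simp add: CAC)
  show ?thesis unfolding mary_inverse_along_def
    apply (intro conjI bC kdd)
    apply (rule exI[of _ C], rule exI[of _ C], rule exI[of _ A], rule exI[of _ A])
    using bC bA e1 ACe e3 by simp
qed

lemma KD_unique:
  assumes bA: "bclin A" and kd1: "KD_inverse A C" and kd2: "KD_inverse A C'"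
  shows "C = C'"
proof -
  have bC: "bclin C" using kd1 by (simp add: KD_inverse_def)
  have bC': "bclin C'" using kd2 by (simp add: KD_inverse_def)
  have kdd: "C \<circ> A \<circ> C = C" using kd1 by (simp add: KD_inverse_def)
  have CAC: "C (A (C x)) = C x" for x using fun_cong[OF kdd, of x] by simp
  have kdd': "C' \<circ> A \<circ> C' = C'" using kd2 by (simp add: KD_inverse_def)
  have CAC': "C' (A (C' x)) = C' x" for x using fun_cong[OF kdd', of x] by simp
  have ACe: "A \<circ> C = C \<circ> A" using kd1 by (simp add: KD_inverse_def)
  have AC: "A (C x) = C (A x)" for x using fun_cong[OF ACe, of x] by simp
  have ACe': "A \<circ> C' = C' \<circ> A" using kd2 by (simp add: KD_inverse_def)
  have AC': "A (C' x) = C' (A x)" for x using fun_cong[OF ACe', of x] by simp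
  have E: "A (C v) = A (C' v)" for v
  proof (rule proj_eq[where E="\<lambda>v. A (C v)" and F="\<lambda>v. A (C' v)"])
    show "bclin (\<lambda>v. A (C v))" "bclin (\<lambda>v. A (C' v))" by (rule bclin_comp[OF bA bC], rule bclin_comp[OF bA bC'])
    show "A (C (A (C v))) = A (C v)" for v by (simp add: CAC)
    show "A (C' (A (C' v))) = A (C' v)" for v by (simp add: CAC')
    show "(A (C v) = 0) = (A (C' v) = 0)" for v
    proof -
      have "v \<in> {x. (A \<circ> C) x = 0} \<longleftrightarrow> v \<in> {x. (A \<circ> C') x = 0}"
        by (simp only: KD_parts(2)[OF bA kd1] KD_parts(2)[OF bA kd2])
      thus ?thesis by simp
    qed
    show "range (\<lambda>v. A (C v)) \<subseteq> range (\<lambda>v. A (C' v))"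
    proof -
      have "range (A \<circ> C) = range (A \<circ> C')"
        by (simp only: KD_parts(1)[OF bA kd1] KD_parts(1)[OF bA kd2])
      thus ?thesis by (simp add: comp_def)
    qed
  qed
  show ?thesis
  proof (rule ext)
    fix x
    have "C x = C (A (C x))" by (simp add: CAC)
    also have "\<dots> = C (A (C' x))" by (simp add: E)
    also have "\<dots> = A (C (C' x))" by (simp add: AC)
    also have "\<dots> = A (C' (C' x))" by (simp add: E)
    also have "\<dots> = C' (A (C' x))" by (rule AC')
    also have "\<dots> = C' x" by (rule CAC')
    finally show "C x = C' x" .
  qed
qed

lemma mary_KD:
  fixes A T B :: "'a::complex_banach \<Rightarrow> 'a"
  assumes bA: "bclin A" and bT: "bclin T" and rT: "range T = analytical_core A"
    and kT: "{x. T x = 0} = quasinilpotent_part A" and mary: "mary_inverse_along A T B"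
  shows "KD_inverse A B"
proof -
  have bB: "bclin B" and BABe: "B \<circ> A \<circ> B = B" using mary by (auto simp: mary_inverse_along_def)
  have BAB: "B (A (B x)) = B x" for x using fun_cong[OF BABe, of x] by simp
  have ex: "\<exists>L U V W. bclin L \<and> bclin U \<and> bclin V \<and> bclin W \<and>
        B = T \<circ> U \<and> T = B \<circ> W \<and> B = L \<circ> T \<and> T = V \<circ> B"
    using mary unfolding mary_inverse_along_def by (rule conjunct2[OF conjunct2])
  obtain L U V W where H: "bclin L \<and> bclin U \<and> bclin V \<and> bclin W \<and>
        B = T \<circ> U \<and> T = B \<circ> W \<and> B = L \<circ> T \<and> T = V \<circ> B"
    using ex by (elim exE) (erule that)
  note H' = H[THEN conjunct2] note H'' = H'[THEN conjunct2] note H3 = H''[THEN conjunct2]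
  note H4 = H3[THEN conjunct2] note H5 = H4[THEN conjunct2] note H6 = H5[THEN conjunct2]
  have LUVW: "bclin L" "bclin U" "bclin V" "bclin W"
    "B = T \<circ> U" "T = B \<circ> W" "B = L \<circ> T" "T = V \<circ> B"
    using H[THEN conjunct1] H'[THEN conjunct1] H''[THEN conjunct1] H3[THEN conjunct1]
      H4[THEN conjunct1] H5[THEN conjunct1] H6[THEN conjunct1] H6[THEN conjunct2] .
  have NB: "B v = 0 \<longleftrightarrow> v \<in> quasinilpotent_part A" for v
  proof -
    have e1: "B v = L (T v)" using fun_cong[OF LUVW(7), of v] by simp
    have e2: "T v = V (B v)" using fun_cong[OF LUVW(8), of v] by simp
    have "B v = 0 \<longleftrightarrow> T v = 0"
    proof
      assume "B v = 0" thus "T v = 0" using e2 bclin_zero[OF LUVW(3)] by simp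
    next
      assume "T v = 0" thus "B v = 0" using e1 bclin_zero[OF LUVW(1)] by simp
    qed
    moreover have "T v = 0 \<longleftrightarrow> v \<in> quasinilpotent_part A"
    proof -
      have "v \<in> {x. T x = 0} \<longleftrightarrow> v \<in> quasinilpotent_part A" by (simp only: kT)
      thus ?thesis by simp
    qed
    ultimately show ?thesis by simp
  qed
  have RB: "range B = analytical_core A"
  proof -
    have "range B \<subseteq> range T"
    proof
      fix y assume "y \<in> range B"
      then obtain v where "y = B v" by blast
      hence "y = T (U v)" using fun_cong[OF LUVW(5), of v] by simp
      thus "y \<in> range T" by blast
    qed
    moreover have "range T \<subseteq> range B"
    proof
      fix y assume "y \<in> range T"
      then obtain v where "y = T v" by blast
      hence "y = B (W v)" using fun_cong[OF LUVW(6), of v] by simp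
      thus "y \<in> range B" by blast
    qed
    ultimately show ?thesis using rT by auto
  qed
  have NAB: "A (B v) = 0 \<longleftrightarrow> B v = 0" for v
  proof
    assume "A (B v) = 0"
    hence "B (A (B v)) = 0" using bclin_zero[OF bB] by simp
    thus "B v = 0" using BAB[of v] by simp
  next
    assume "B v = 0" thus "A (B v) = 0" using bclin_zero[OF bA] by simp
  qed
  have NBA: "B (A v) = 0 \<longleftrightarrow> v \<in> quasinilpotent_part A" for v
  proof -
    have "A v \<in> quasinilpotent_part A \<longleftrightarrow> v \<in> quasinilpotent_part A"
      using H0_shift1[of v A] H0_shift2[of A v] by blast
    thus ?thesis using NB[of "A v"] by simp
  qed
  have comm: "A (B v) = B (A v)" for v
  proof (rule proj_eq[where E="\<lambda>v. A (B v)" and F="\<lambda>v. B (A v)"])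
    show "bclin (\<lambda>v. A (B v))" "bclin (\<lambda>v. B (A v))" by (rule bclin_comp[OF bA bB], rule bclin_comp[OF bB bA])
    show "A (B (A (B v))) = A (B v)" for v by (simp add: BAB)
    show "B (A (B (A v))) = B (A v)" for v by (simp add: BAB)
    show "(A (B v) = 0) = (B (A v) = 0)" for v using NAB NB NBA by simp
    show "range (\<lambda>v. A (B v)) \<subseteq> range (\<lambda>v. B (A v))"
    proof
      fix y assume "y \<in> range (\<lambda>v. A (B v))"
      then obtain v where y: "y = A (B v)" by blast
      have "B v \<in> analytical_core A" using RB by blast
      hence "y \<in> range B" using K_image[OF bA] RB y by blast
      then obtain w where "y = B w" by blast
      hence "y = B (A (B w))" by (simp add: BAB)
      thus "y \<in> range (\<lambda>v. B (A v))" by blast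
    qed
  qed
  have qn: "quasinilpotent (\<lambda>x. A (x - A (B x)))"
    unfolding quasinilpotent_def op_spectrum_def
  proof
    fix z assume "z \<in> {z. \<not> op_invertible (\<lambda>x. z *\<^sub>C x - A (x - A (B x)))}"
    hence ninv: "\<not> op_invertible (\<lambda>x. z *\<^sub>C x - A (x - A (B x)))" by simp
    show "z \<in> {0}"
    proof (rule ccontr)
      assume "z \<notin> {0}"
      hence z0: "z \<noteq> 0" by simp
      define P where "P v = v - A (B v)" for v
      have bP: "bclin P" unfolding P_def[abs_def] by (intro bclin_minus bclin_id bclin_comp[OF bA bB])
      have PP: "P (P v) = P v" for v using bA bB by (simp add: P_def bclin_diff BAB bclin_zero)
      have PA: "P (A v) = A (P v)" for v using bA by (simp add: P_def bclin_diff comm)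
      have BP: "B (P v) = 0" for v
      proof -
        have "A (B (P v)) = 0" using bA bB by (simp add: bclin_zero[OF bA] bclin_zero[OF bB] P_def bclin_diff BAB)
        thus ?thesis using NAB by blast
      qed
      have PH: "P v \<in> quasinilpotent_part A" for v using BP NB by blast
      define I where "I x = z *\<^sub>C x - A (P x)" for x
      have bI: "bclin I" unfolding I_def[abs_def]
        by (intro bclin_minus bclin_scaleC bclin_id bclin_comp[OF bA bP])
      define \<rho> where "\<rho> = cmod z / 2"
      have \<rho>: "0 < \<rho>" using z0 by (simp add: \<rho>_def)
      obtain C0 where C0: "\<forall>n v. norm ((1 / \<rho>) ^ n *\<^sub>R (A ^^ n) (P v)) \<le> C0 * norm v"
      proof -
        have "\<exists>C. \<forall>n v. norm ((1 / \<rho>) ^ n *\<^sub>R (A ^^ n) (P v)) \<le> C * norm v"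
        proof (rule unif_bound)
          fix n show "bounded_linear (\<lambda>v. (1 / \<rho>) ^ n *\<^sub>R (A ^^ n) (P v))"
            by (intro bclin_bl bclin_scaleR_fun bclin_comp[OF bclin_funpow[OF bA] bP])
        next
          fix v
          obtain N where N: "\<forall>n\<ge>N. norm ((A ^^ n) (P v)) \<le> \<rho> ^ n"
            using PH[of v] \<rho> unfolding H0_iff by blast
          define K where "K = (\<Sum>n<N. norm ((1 / \<rho>) ^ n *\<^sub>R (A ^^ n) (P v))) + 1"
          show "\<exists>K. \<forall>n. norm ((1 / \<rho>) ^ n *\<^sub>R (A ^^ n) (P v)) \<le> K"
          proof (intro exI[of _ K] allI)
            fix n
            show "norm ((1 / \<rho>) ^ n *\<^sub>R (A ^^ n) (P v)) \<le> K"
            proof (cases "n < N")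
              case True
              have "norm ((1 / \<rho>) ^ n *\<^sub>R (A ^^ n) (P v))
                  \<le> (\<Sum>n<N. norm ((1 / \<rho>) ^ n *\<^sub>R (A ^^ n) (P v)))"
                by (rule member_le_sum) (use True in auto)
              thus ?thesis by (simp add: K_def)
            next
              case False
              have "norm ((1 / \<rho>) ^ n *\<^sub>R (A ^^ n) (P v)) = (1 / \<rho>) ^ n * norm ((A ^^ n) (P v))"
                using \<rho> by simp
              also have "\<dots> \<le> (1 / \<rho>) ^ n * \<rho> ^ n"
                using N False \<rho> by (intro mult_left_mono) auto
              also have "\<dots> = 1" using \<rho> by (simp add: power_mult_distrib[symmetric])
              also have "\<dots> \<le> K" by (simp add: K_def sum_nonneg)
              finally show ?thesis .
            qed
          qed
        qed
        thus ?thesis using that by blast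
      qed
      have Abound: "norm ((A ^^ n) (P v)) \<le> C0 * \<rho> ^ n * norm v" for n v
      proof -
        have "norm ((1 / \<rho>) ^ n *\<^sub>R (A ^^ n) (P v)) = (1 / \<rho>) ^ n * norm ((A ^^ n) (P v))"
          using \<rho> by simp
        hence "(1 / \<rho>) ^ n * norm ((A ^^ n) (P v)) \<le> C0 * norm v" using C0[rule_format, of n v] by linarith
        hence "\<rho> ^ n * ((1 / \<rho>) ^ n * norm ((A ^^ n) (P v))) \<le> \<rho> ^ n * (C0 * norm v)"
          using \<rho> by (intro mult_left_mono) auto
        thus ?thesis using \<rho> by (simp add: power_one_over field_simps)
      qed
      define f where "f y n = inverse z ^ n *\<^sub>C (A ^^ n) (P y)" for y n
      define s where "s y n = inverse z *\<^sub>C f y n" for y n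
      have fb: "norm (f y n) \<le> C0 * norm y * (1/2) ^ n" for y n
      proof -
        have "norm (f y n) = (1 / cmod z) ^ n * norm ((A ^^ n) (P y))"
          by (simp add: f_def norm_scaleC norm_power norm_inverse power_one_over divide_inverse power_inverse mult.commute)
        also have "\<dots> \<le> (1 / cmod z) ^ n * (C0 * \<rho> ^ n * norm y)"
          by (intro mult_left_mono Abound) simp
        also have "\<dots> = C0 * norm y * ((1 / cmod z) ^ n * \<rho> ^ n)" by (simp add: algebra_simps)
        also have "(1 / cmod z) ^ n * \<rho> ^ n = (1/2) ^ n"
          using z0 by (simp add: \<rho>_def power_mult_distrib[symmetric])
        finally show ?thesis .
      qed
      have sumg: "summable (\<lambda>n. C0 * norm y * (1/2::real) ^ n)" for y
        by (intro summable_mult summable_geometric) simp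
      have sumf: "summable (f y)" for y
        by (rule summable_comparison_test[OF _ sumg]) (use fb in blast)
      have sums_: "summable (s y)" for y
        unfolding s_def by (rule bounded_linear.summable[OF bounded_linear_scaleC sumf])
      have flim: "f y \<longlonglongrightarrow> 0" for y
      proof (rule Lim_null_comparison)
        show "\<forall>\<^sub>F n in sequentially. norm (f y n) \<le> C0 * norm y * (1/2) ^ n" using fb by simp
        show "(\<lambda>n. C0 * norm y * (1/2::real) ^ n) \<longlonglongrightarrow> 0"
          by (rule tendsto_mult_right_zero, rule LIMSEQ_power_zero) simp
      qed
      define S where "S y = inverse z *\<^sub>C A (B y) + suminf (s y)" for y
      have s_add: "s (y1 + y2) n = s y1 n + s y2 n" for y1 y2 n
        using bA bP by (simp add: s_def f_def bclin_add bclin_funpow scaleC_add_right)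
      have s_scaleR: "s (r *\<^sub>R y) n = r *\<^sub>R s y n" for r y n
        using bA bP by (simp add: s_def f_def bclin_scaleR bclin_funpow scaleC_scaleR_comm)
      have s_scaleC: "s (c *\<^sub>C y) n = c *\<^sub>C s y n" for c y n
        using bA bP by (simp add: s_def f_def bclin_C bclin_funpow scaleC_scaleC mult_ac)
      have s_addf: "s (y1 + y2) = (\<lambda>n. s y1 n + s y2 n)" for y1 y2 by (rule ext) (rule s_add)
      have s_scaleRf: "s (r *\<^sub>R y) = (\<lambda>n. r *\<^sub>R s y n)" for r y by (rule ext) (rule s_scaleR)
      have s_scaleCf: "s (c *\<^sub>C y) = (\<lambda>n. c *\<^sub>C s y n)" for c y by (rule ext) (rule s_scaleC)
      have Snorm: "norm (S y) \<le> (cmod (inverse z) * onorm (\<lambda>v. A (B v)) + cmod (inverse z) * (2 * C0)) * norm y" for y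
      proof -
        have bAB: "bclin (\<lambda>v. A (B v))" by (rule bclin_comp[OF bA bB])
        have a: "norm (inverse z *\<^sub>C A (B y)) \<le> cmod (inverse z) * (onorm (\<lambda>v. A (B v)) * norm y)"
          using bclin_onorm[OF bAB, of y] by (simp add: norm_scaleC mult_left_mono)
        have "norm (suminf (s y)) = cmod (inverse z) * norm (suminf (f y))"
          unfolding s_def using bounded_linear.suminf[OF bounded_linear_scaleC sumf, of "inverse z" y]
          by (metis norm_scaleC)
        also have "norm (suminf (f y)) \<le> (\<Sum>n. C0 * norm y * (1/2::real) ^ n)"
        proof -
          have sn: "summable (\<lambda>n. norm (f y n))"
            by (rule summable_comparison_test[OF _ sumg]) (use fb in auto)
          have "norm (suminf (f y)) \<le> (\<Sum>n. norm (f y n))" by (rule summable_norm[OF sn])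
          also have "\<dots> \<le> (\<Sum>n. C0 * norm y * (1/2::real) ^ n)"
            by (rule suminf_le[OF _ sn sumg]) (rule fb)
          finally show ?thesis .
        qed
        also have "(\<Sum>n. C0 * norm y * (1/2::real) ^ n) = C0 * norm y * 2"
          using suminf_geometric[of "1/2::real"] by (simp add: suminf_mult)
        finally have b: "norm (suminf (s y)) \<le> cmod (inverse z) * (C0 * norm y * 2)"
          by (simp add: mult_left_mono)
        have "norm (S y) \<le> norm (inverse z *\<^sub>C A (B y)) + norm (suminf (s y))"
          by (simp add: S_def norm_triangle_ineq)
        also have "\<dots> \<le> cmod (inverse z) * (onorm (\<lambda>v. A (B v)) * norm y) + cmod (inverse z) * (C0 * norm y * 2)"
          using a b by linarith
        finally show ?thesis by (simp add: algebra_simps)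
      qed
      have bS: "bclin S" unfolding bclin_def
      proof (intro conjI allI)
        show "bounded_linear S"
        proof (rule bounded_linear_intro[where K="cmod (inverse z) * onorm (\<lambda>v. A (B v)) + cmod (inverse z) * (2 * C0)"])
          fix y1 y2
          show "S (y1 + y2) = S y1 + S y2"
            using bA bB suminf_add[OF sums_[of y1] sums_[of y2]]
            by (simp add: S_def s_addf bclin_add scaleC_add_right algebra_simps)
        next
          fix r y
          show "S (r *\<^sub>R y) = r *\<^sub>R S y"
            using bA bB suminf_scaleR_right[OF sums_[of y], of r]
            by (simp add: S_def s_scaleRf bclin_scaleR scaleC_scaleR_comm scaleR_add_right)
        next
          fix y
          show "norm (S y) \<le> norm y * (cmod (inverse z) * onorm (\<lambda>v. A (B v)) + cmod (inverse z) * (2 * C0))"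
            using Snorm[of y] by (simp add: mult.commute)
        qed
        fix c y
        show "S (c *\<^sub>C y) = c *\<^sub>C S y"
          using bA bB bounded_linear.suminf[OF bounded_linear_scaleC sums_[of y], of c]
          by (simp add: S_def s_scaleCf bclin_C scaleC_scaleC scaleC_add_right mult.commute)
      qed
      have right: "I (S y) = y" for y
      proof -
        define a where "a = inverse z *\<^sub>C A (B y)"
        define \<sigma> where "\<sigma> = suminf (s y)"
        have Pa: "P a = 0" using bA bB by (simp add: a_def P_def bclin_C BAB)
        have Ps: "P (s y n) = s y n" for n
        proof -
          have "P ((A ^^ n) (P y)) = (A ^^ n) (P (P y))" by (rule funpow_comm) (rule PA)
          thus ?thesis using bP by (simp add: s_def f_def bclin_C PP)
        qed
        have Psig: "P \<sigma> = \<sigma>"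
          using bounded_linear.suminf[OF bclin_bl[OF bP] sums_[of y]] by (simp add: \<sigma>_def Ps)
        have s1: "(\<lambda>n. z *\<^sub>C s y n) sums (z *\<^sub>C \<sigma>)"
          unfolding \<sigma>_def by (rule bounded_linear.sums[OF bounded_linear_scaleC summable_sums[OF sums_]])
        have s2: "(\<lambda>n. A (s y n)) sums (A \<sigma>)"
          unfolding \<sigma>_def by (rule bounded_linear.sums[OF bclin_bl[OF bA] summable_sums[OF sums_]])
        have "(\<lambda>n. z *\<^sub>C s y n - A (s y n)) sums (z *\<^sub>C \<sigma> - A \<sigma>)" by (rule sums_diff[OF s1 s2])
        moreover have "(\<lambda>n. z *\<^sub>C s y n - A (s y n)) = (\<lambda>n. f y n - f y (Suc n))"
        proof
          fix n
          have "z *\<^sub>C s y n = f y n" using z0 by (simp add: s_def scaleC_scaleC)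
          moreover have "A (s y n) = f y (Suc n)"
            using bA by (simp add: s_def f_def bclin_C scaleC_scaleC mult.commute)
          ultimately show "z *\<^sub>C s y n - A (s y n) = f y n - f y (Suc n)" by simp
        qed
        moreover have "(\<lambda>n. f y n - f y (Suc n)) sums (f y 0 - 0)" by (rule telescope_sums'[OF flim])
        ultimately have "(\<lambda>n. f y n - f y (Suc n)) sums (z *\<^sub>C \<sigma> - A \<sigma>)"
          "(\<lambda>n. f y n - f y (Suc n)) sums (f y 0 - 0)" by simp_all
        hence "z *\<^sub>C \<sigma> - A \<sigma> = f y 0" using sums_unique2 by fastforce
        hence "z *\<^sub>C \<sigma> - A \<sigma> = P y" by (simp add: f_def)
        moreover have "z *\<^sub>C a - A (P a) = A (B y)"
        proof -
          have "z *\<^sub>C a = A (B y)" using z0 by (simp add: a_def scaleC_scaleC)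
          moreover have "A (P a) = 0" by (simp add: Pa bclin_zero[OF bA])
          ultimately show ?thesis by simp
        qed
        moreover have "I (S y) = (z *\<^sub>C a - A (P a)) + (z *\<^sub>C \<sigma> - A (P \<sigma>))"
          using bA bP by (simp add: I_def S_def a_def[symmetric] \<sigma>_def[symmetric] bclin_add scaleC_add_right)
        ultimately show ?thesis using Psig by (simp add: P_def)
      qed
      have inj: "x = 0" if Ix: "I x = 0" for x
      proof -
        have "A (B (I x)) = z *\<^sub>C A (B x) - A (B (A (P x)))"
          using bA bB by (simp add: I_def bclin_diff bclin_C)
        also have "B (A (P x)) = 0" using BP bA by (simp add: comm[symmetric] bclin_zero)
        finally have "z *\<^sub>C A (B x) = 0" using Ix bA bB by (simp add: bclin_zero)
        hence "inverse z *\<^sub>C (z *\<^sub>C A (B x)) = 0" by simp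
        hence ABx: "A (B x) = 0" using z0 by (simp add: scaleC_scaleC)
        hence Px: "P x = x" by (simp add: P_def)
        hence Ax: "A x = z *\<^sub>C x" using Ix by (simp add: I_def)
        have xH: "x \<in> quasinilpotent_part A" using PH[of x] Px by simp
        have pw: "(A ^^ n) x = z ^ n *\<^sub>C x" for n
          by (induction n) (use bA Ax in \<open>simp_all add: bclin_C scaleC_scaleC mult.commute\<close>)
        obtain N where N: "\<forall>n\<ge>N. norm ((A ^^ n) x) \<le> \<rho> ^ n" using xH \<rho> unfolding H0_iff by blast
        have "norm x \<le> 1 * (1/2) ^ n" if "N \<le> n" for n
        proof -
          have "cmod z ^ n * norm x \<le> \<rho> ^ n" using N that by (simp add: pw norm_scaleC norm_power)
          hence "cmod z ^ n * norm x \<le> cmod z ^ n * (1/2) ^ n" by (simp add: \<rho>_def power_divide)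
          thus ?thesis using z0 by simp
        qed
        hence "norm x \<le> 0" by (intro zero_by_decay[of N]) blast
        thus ?thesis by simp
      qed
      have left: "S (I v) = v" for v
      proof -
        have "I (S (I v) - v) = 0" using right[of "I v"] bI by (simp add: bclin_diff)
        hence "S (I v) - v = 0" by (rule inj)
        thus ?thesis by simp
      qed
      have "op_invertible (\<lambda>x. z *\<^sub>C x - A (x - A (B x)))"
        unfolding op_invertible_def
      proof (intro exI[of _ S] conjI)
        show "bclin S" by (fact bS)
        show "(\<lambda>x. z *\<^sub>C x - A (x - A (B x))) \<circ> S = id"
          using right by (simp add: fun_eq_iff I_def P_def)
        show "S \<circ> (\<lambda>x. z *\<^sub>C x - A (x - A (B x))) = id"
          using left by (simp add: fun_eq_iff I_def P_def)
      qed
      thus False using ninv by simp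
    qed
  qed
  have "A \<circ> B = B \<circ> A" using comm by (simp add: fun_eq_iff)
  thus ?thesis unfolding KD_inverse_def using bB BABe qn by simp
qed


theorem proposition4p1:
  fixes A :: "'a::complex_banach \<Rightarrow> 'a"
  assumes "bclin A"
  shows "(KD_invertible A \<longleftrightarrow>
           (\<exists>T. bclin T \<and> range T = analytical_core A \<and> {x. T x = 0} = quasinilpotent_part A
              \<and> (\<exists>B. mary_inverse_along A T B)))
       \<and> (\<forall>T B. bclin T \<and> range T = analytical_core A \<and> {x. T x = 0} = quasinilpotent_part A
           \<and> mary_inverse_along A T B \<longrightarrow> KD_invertible A \<and> B = KD_inv A)"
proof (intro conjI allI impI iffI)
  assume "KD_invertible A"
  then obtain C where kd: "KD_inverse A C" by (auto simp: KD_invertible_def)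
  have bC: "bclin C" using kd by (simp add: KD_inverse_def)
  show "\<exists>T. bclin T \<and> range T = analytical_core A \<and> {x. T x = 0} = quasinilpotent_part A
              \<and> (\<exists>B. mary_inverse_along A T B)"
  proof (intro exI conjI)
    show "bclin (A \<circ> C)" by (rule bclin_o[OF assms bC])
    show "range (A \<circ> C) = analytical_core A" by (rule KD_parts(1)[OF assms kd])
    show "{x. (A \<circ> C) x = 0} = quasinilpotent_part A" by (rule KD_parts(2)[OF assms kd])
    show "mary_inverse_along A (A \<circ> C) C" by (rule KD_mary[OF assms kd])
  qed
next
  assume "\<exists>T. bclin T \<and> range T = analytical_core A \<and> {x. T x = 0} = quasinilpotent_part A
              \<and> (\<exists>B. mary_inverse_along A T B)"
  then obtain T B where "bclin T" "range T = analytical_core A" "{x. T x = 0} = quasinilpotent_part A"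
    "mary_inverse_along A T B" by blast
  hence "KD_inverse A B" using mary_KD[OF assms] by blast
  thus "KD_invertible A" by (auto simp: KD_invertible_def)
next
  fix T B
  assume h: "bclin T \<and> range T = analytical_core A \<and> {x. T x = 0} = quasinilpotent_part A
           \<and> mary_inverse_along A T B"
  have kd: "KD_inverse A B" using h mary_KD[OF assms] by blast
  show "KD_invertible A" using kd by (auto simp: KD_invertible_def)
  have "(THE C. KD_inverse A C) = B"
  proof (rule the_equality)
    show "KD_inverse A B" by (rule kd)
    fix C assume "KD_inverse A C"
    thus "C = B" using KD_unique[OF assms] kd by blast
  qed
  thus "B = KD_inv A" by (simp add: KD_inv_def)
qed


end
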